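(* Let $W$ be the unilateral weighted shift on $\ell^2$ with bounded positive weights $\{w_n\}_{n\ge0}$, and let $m\ge2$ be an integer. The following are equivalent: (i) $W$ is a weakly concave $m$-isometry; (ii) there exists $p\in\mathbb R[x]$ of degree at most $m-1$ such that $p(n)>0$ and $w_n^2=p(n+1)/p(n)$ for all $n\in\mathbb Z_+$, $p(n)\le p(n+1)$ for all $n\in\mathbb Z_+$, and $p(n)p(n+2)\le p(n+1)^2$ for all integers $n\ge1$. Moreover, if $p\in\mathbb R[x]$ has positive leading coefficient and all its roots are negative real numbers, then $p(n)\le p(n+1)$ for all $n\in\mathbb Z_+$ and $p(n)p(n+2)\le p(n+1)^2$ for all $n\ge1$.
   Context: $We_n=w_ne_{n+1}$ for the standard basis $\{e_n\}$. $T$ is an $m$-isometry if $\sum_{k=0}^m(-1)^k\binom mk T^{*k}T^k=0$. For left-invertible $T$, $T'=T(T^*T)^{-1}$; $T$ is weakly concave if it is left-invertible, $\sigma_{ap}(T)\subseteq\partial\mathbb D$ (approximate point spectrum in the unit circle), $\|x\|\le\|Tx\|$ for all $x$, and $\|T'T^*x\|\le\|T'Tx\|$ for all $x$. *)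

theory Defs
  imports "HOL-Analysis.Analysis" "HOL-Computational_Algebra.Polynomial"
begin

text \<open>The Hilbert space l2 = l2(Z_+) of complex square-summable sequences,
  realised as a subset of nat => complex. Operators are functions on sequences,
  considered only on l2.\<close>

type_synonym seq = "nat \<Rightarrow> complex"
type_synonym op = "seq \<Rightarrow> seq"

definition l2 :: "seq set" where
  "l2 = {x. summable (\<lambda>n. (cmod (x n))\<^sup>2)}"

definition l2_norm :: "seq \<Rightarrow> real" where
  "l2_norm x = sqrt (\<Sum>n. (cmod (x n))\<^sup>2)"

definition l2_inner :: "seq \<Rightarrow> seq \<Rightarrow> complex" where
  "l2_inner x y = (\<Sum>n. x n * cnj (y n))"

definition bounded_op :: "op \<Rightarrow> bool" where
  "bounded_op T \<longleftrightarrow>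
     (\<forall>x\<in>l2. T x \<in> l2) \<and>
     (\<forall>x\<in>l2. \<forall>y\<in>l2. \<forall>a b. T (\<lambda>n. a * x n + b * y n) = (\<lambda>n. a * T x n + b * T y n)) \<and>
     (\<exists>C. \<forall>x\<in>l2. l2_norm (T x) \<le> C * l2_norm x)"

definition is_adjoint :: "op \<Rightarrow> op \<Rightarrow> bool" where
  "is_adjoint T S \<longleftrightarrow> (\<forall>y\<in>l2. S y \<in> l2) \<and>
     (\<forall>x\<in>l2. \<forall>y\<in>l2. l2_inner (T x) y = l2_inner x (S y))"

definition adj :: "op \<Rightarrow> op" where
  "adj T = (SOME S. is_adjoint T S)"

definition op_inv :: "op \<Rightarrow> op" where
  "op_inv A = (SOME B. bounded_op B \<and> (\<forall>x\<in>l2. A (B x) = x \<and> B (A x) = x))"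

definition left_invertible :: "op \<Rightarrow> bool" where
  "left_invertible T \<longleftrightarrow> bounded_op T \<and> (\<exists>L. bounded_op L \<and> (\<forall>x\<in>l2. L (T x) = x))"

definition cauchy_dual :: "op \<Rightarrow> op" where
  "cauchy_dual T = T \<circ> op_inv (adj T \<circ> T)"

definition ap_spec :: "op \<Rightarrow> complex set" where
  "ap_spec T = {c. \<exists>x :: nat \<Rightarrow> seq. (\<forall>k. x k \<in> l2 \<and> l2_norm (x k) = 1) \<and>
      (\<lambda>k. l2_norm (\<lambda>n. T (x k) n - c * x k n)) \<longlonglongrightarrow> 0}"

definition weakly_concave :: "op \<Rightarrow> bool" where
  "weakly_concave T \<longleftrightarrow> left_invertible T \<and> ap_spec T \<subseteq> {z. cmod z = 1} \<and>
     (\<forall>x\<in>l2. l2_norm x \<le> l2_norm (T x)) \<and>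
     (\<forall>x\<in>l2. l2_norm (cauchy_dual T (adj T x)) \<le> l2_norm (cauchy_dual T (T x)))"

definition m_isometry :: "nat \<Rightarrow> op \<Rightarrow> bool" where
  "m_isometry m T \<longleftrightarrow> bounded_op T \<and> (\<forall>x\<in>l2.
     (\<lambda>n. \<Sum>k\<le>m. (-1)^k * of_nat (m choose k) * ((adj T ^^ k) ((T ^^ k) x)) n) = (\<lambda>_. 0))"

text \<open>Unilateral weighted shift: W e_n = w_n e_{n+1}.\<close>
definition wshift :: "(nat \<Rightarrow> real) \<Rightarrow> op" where
  "wshift w x = (\<lambda>n. if n = 0 then 0 else complex_of_real (w (n - 1)) * x (n - 1))"

end

theory Submission
  imports Defs "HOL-Real_Asymp.Real_Asymp" "HOL-Computational_Algebra.Fundamental_Theorem_Algebra"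
begin

lemma l2_iff: "x \<in> l2 \<longleftrightarrow> summable (\<lambda>n. (cmod (x n))\<^sup>2)"
  by (simp add: l2_def)

lemma l2_norm_nonneg: "x \<in> l2 \<Longrightarrow> l2_norm x \<ge> 0"
  unfolding l2_norm_def l2_def by (auto intro: suminf_nonneg)

lemma l2_norm_sq: assumes "x \<in> l2" shows "(l2_norm x)\<^sup>2 = (\<Sum>n. (cmod (x n))\<^sup>2)"
proof -
  have "0 \<le> (\<Sum>n. (cmod (x n))\<^sup>2)" using assms by (intro suminf_nonneg) (auto simp: l2_def)
  then show ?thesis by (simp add: l2_norm_def)
qed

lemma l2_norm_sq': "summable (\<lambda>n. (cmod (x n))\<^sup>2) \<Longrightarrow> (l2_norm x)\<^sup>2 = (\<Sum>n. (cmod (x n))\<^sup>2)"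
  using l2_norm_sq l2_iff by blast

lemma l2_norm_le_iff: "x \<in> l2 \<Longrightarrow> y \<in> l2 \<Longrightarrow>
   l2_norm x \<le> l2_norm y \<longleftrightarrow> (\<Sum>n. (cmod (x n))\<^sup>2) \<le> (\<Sum>n. (cmod (y n))\<^sup>2)"
  unfolding l2_norm_def by (simp add: l2_def)

lemma l2_add: assumes "x \<in> l2" "y \<in> l2" shows "(\<lambda>n. x n + y n) \<in> l2"
proof -
  have "summable (\<lambda>n. 2 * (cmod (x n))\<^sup>2 + 2 * (cmod (y n))\<^sup>2)"
    using assms by (intro summable_add summable_mult) (auto simp: l2_def)
  moreover have "norm ((cmod (x n + y n))\<^sup>2) \<le> 2 * (cmod (x n))\<^sup>2 + 2 * (cmod (y n))\<^sup>2" for n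
  proof -
    have "cmod (x n + y n) \<le> cmod (x n) + cmod (y n)" by (rule norm_triangle_ineq)
    then have "(cmod (x n + y n))\<^sup>2 \<le> (cmod (x n) + cmod (y n))\<^sup>2"
      by (simp add: power_mono)
    also have "\<dots> \<le> 2 * (cmod (x n))\<^sup>2 + 2 * (cmod (y n))\<^sup>2"
    proof -
      have "0 \<le> (cmod (x n) - cmod (y n))\<^sup>2" by simp
      then show ?thesis unfolding power2_sum power2_diff by linarith
    qed
    finally show ?thesis by simp
  qed
  ultimately show ?thesis unfolding l2_def
    by (auto intro: summable_comparison_test')
qed

lemma l2_scale: assumes "x \<in> l2" shows "(\<lambda>n. c * x n) \<in> l2"
  and "l2_norm (\<lambda>n. c * x n) = cmod c * l2_norm x"
proof -
  have s: "summable (\<lambda>n. (cmod c)\<^sup>2 * (cmod (x n))\<^sup>2)" using assms by (intro summable_mult) (simp add: l2_def)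
  then show "(\<lambda>n. c * x n) \<in> l2" by (simp add: l2_def norm_mult power_mult_distrib)
  have "l2_norm (\<lambda>n. c * x n) = sqrt ((cmod c)\<^sup>2 * (\<Sum>n. (cmod (x n))\<^sup>2))"
    unfolding l2_norm_def using assms
    by (simp add: norm_mult power_mult_distrib suminf_mult l2_def)
  also have "\<dots> = cmod c * l2_norm x" by (simp add: real_sqrt_mult l2_norm_def)
  finally show "l2_norm (\<lambda>n. c * x n) = cmod c * l2_norm x" .
qed

lemma l2_neg: "x \<in> l2 \<Longrightarrow> (\<lambda>n. - x n) \<in> l2"
  using l2_scale(1)[of x "-1"] by simp

lemma l2_diff: "x \<in> l2 \<Longrightarrow> y \<in> l2 \<Longrightarrow> (\<lambda>n. x n - y n) \<in> l2"
  using l2_add[of x "\<lambda>n. - y n"] l2_neg[of y] by simp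

lemma l2_partial_le: "x \<in> l2 \<Longrightarrow> L2_set (\<lambda>n. cmod (x n)) {..<N} \<le> l2_norm x"
  unfolding L2_set_def l2_norm_def l2_def
  by (intro real_sqrt_le_mono sum_le_suminf) auto

lemma l2_triangle: assumes "x \<in> l2" "y \<in> l2"
  shows "l2_norm (\<lambda>n. x n + y n) \<le> l2_norm x + l2_norm y"
proof -
  have s: "summable (\<lambda>n. (cmod (x n + y n))\<^sup>2)" using l2_add[OF assms] by (simp add: l2_def)
  have "sum (\<lambda>n. (cmod (x n + y n))\<^sup>2) {..<N} \<le> (l2_norm x + l2_norm y)\<^sup>2" for N
  proof -
    have "L2_set (\<lambda>n. cmod (x n + y n)) {..<N} \<le> L2_set (\<lambda>n. cmod (x n) + cmod (y n)) {..<N}"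
      by (rule L2_set_mono) (auto intro: norm_triangle_ineq)
    also have "\<dots> \<le> L2_set (\<lambda>n. cmod (x n)) {..<N} + L2_set (\<lambda>n. cmod (y n)) {..<N}"
      by (rule L2_set_triangle_ineq)
    also have "\<dots> \<le> l2_norm x + l2_norm y" using l2_partial_le assms by (meson add_mono)
    finally have "sqrt (sum (\<lambda>n. (cmod (x n + y n))\<^sup>2) {..<N}) \<le> l2_norm x + l2_norm y"
      by (simp add: L2_set_def)
    moreover have s0: "0 \<le> sum (\<lambda>n. (cmod (x n + y n))\<^sup>2) {..<N}" by (intro sum_nonneg) simp
    ultimately have "(sqrt (sum (\<lambda>n. (cmod (x n + y n))\<^sup>2) {..<N}))\<^sup>2 \<le> (l2_norm x + l2_norm y)\<^sup>2"
      by (intro power_mono) auto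
    then show ?thesis using s0 by simp
  qed
  then have "(\<Sum>n. (cmod (x n + y n))\<^sup>2) \<le> (l2_norm x + l2_norm y)\<^sup>2"
    using s by (intro suminf_le_const) auto
  then have "sqrt (\<Sum>n. (cmod (x n + y n))\<^sup>2) \<le> sqrt ((l2_norm x + l2_norm y)\<^sup>2)"
    by (rule real_sqrt_le_mono)
  also have "\<dots> = l2_norm x + l2_norm y" using l2_norm_nonneg[OF assms(1)] l2_norm_nonneg[OF assms(2)] by simp
  finally show ?thesis unfolding l2_norm_def[of "\<lambda>n. x n + y n"] .
qed

lemma l2_rev_triangle: assumes "x \<in> l2" "y \<in> l2"
  shows "l2_norm x - l2_norm y \<le> l2_norm (\<lambda>n. x n - y n)"
  using l2_triangle[OF l2_diff[OF assms] assms(2)] by simp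

lemma l2_triangle_diff: assumes "x \<in> l2" "y \<in> l2"
  shows "l2_norm (\<lambda>n. x n - y n) \<le> l2_norm x + l2_norm y"
proof -
  have "l2_norm (\<lambda>n. x n + - y n) \<le> l2_norm x + l2_norm (\<lambda>n. - y n)"
    by (rule l2_triangle[OF assms(1) l2_neg[OF assms(2)]])
  moreover have "l2_norm (\<lambda>n. - y n) = l2_norm y" using l2_scale(2)[OF assms(2), of "-1"] by simp
  ultimately show ?thesis by simp
qed

definition ee :: "nat \<Rightarrow> seq" where "ee k = (\<lambda>n. if n = k then 1 else 0)"

lemma sum_single: "(\<Sum>n. (if n = k then a else 0 :: 'a::real_normed_vector)) = a"
proof -
  have "(\<lambda>n. if n = k then a else 0) sums a"
    using sums_single[of k "\<lambda>_. a"] by simp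
  then show ?thesis by (simp add: sums_iff)
qed

lemma ee_l2: "ee k \<in> l2" and ee_norm: "l2_norm (ee k) = 1"
proof -
  have e: "(\<lambda>n. (cmod (ee k n))\<^sup>2) = (\<lambda>n. if n = k then 1 else 0)" by (auto simp: ee_def)
  show "ee k \<in> l2" unfolding l2_def using e summable_single[of k "\<lambda>_. 1::real"] by simp
  show "l2_norm (ee k) = 1" unfolding l2_norm_def e sum_single by simp
qed

lemma suminf_weight_ee: "(\<Sum>n. f n * (cmod (ee k n))\<^sup>2) = (f k :: real)"
proof -
  have "(\<lambda>n. f n * (cmod (ee k n))\<^sup>2) = (\<lambda>n. if n = k then f k else 0)" by (auto simp: ee_def)
  then show ?thesis by (simp add: sum_single)
qed

lemma inner_ee_left: "l2_inner (ee k) y = cnj (y k)"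
proof -
  have "(\<lambda>n. ee k n * cnj (y n)) = (\<lambda>n. if n = k then cnj (y k) else 0)" by (auto simp: ee_def)
  then show ?thesis unfolding l2_inner_def by (simp add: sum_single)
qed

definition sadj :: "(nat \<Rightarrow> real) \<Rightarrow> op" where
  "sadj w y = (\<lambda>n. complex_of_real (w n) * y (Suc n))"

lemma wshift_0[simp]: "wshift w x 0 = 0" and wshift_Suc[simp]: "wshift w x (Suc n) = of_real (w n) * x n"
  by (simp_all add: wshift_def)

lemma wsum_summable:
  assumes "x \<in> l2" "\<forall>n. 0 \<le> c n \<and> c n \<le> K"
  shows "summable (\<lambda>n. c n * (cmod (x n))\<^sup>2)"
proof (rule summable_comparison_test')
  show "summable (\<lambda>n. K * (cmod (x n))\<^sup>2)" using assms by (intro summable_mult) (simp add: l2_def)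
  fix n show "norm (c n * (cmod (x n))\<^sup>2) \<le> K * (cmod (x n))\<^sup>2"
    using assms(2) by (auto intro: mult_right_mono)
qed

lemma l2_Suc: "x \<in> l2 \<Longrightarrow> (\<lambda>n. x (Suc n)) \<in> l2"
  unfolding l2_def using summable_Suc_iff[of "\<lambda>n. (cmod (x n))\<^sup>2"] by simp

lemma wshift_sums_iff:
  "(\<lambda>n. (cmod (wshift w x n))\<^sup>2) sums s \<longleftrightarrow> (\<lambda>n. (w n)\<^sup>2 * (cmod (x n))\<^sup>2) sums s"
proof -
  have "(\<lambda>n. (cmod (wshift w x (Suc n)))\<^sup>2) = (\<lambda>n. (w n)\<^sup>2 * (cmod (x n))\<^sup>2)"
    by (simp add: norm_mult power_mult_distrib)
  then show ?thesis using sums_Suc_iff[of "\<lambda>n. (cmod (wshift w x n))\<^sup>2" s] by simp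
qed

lemma bnd_sq: fixes w :: "nat \<Rightarrow> real" assumes "\<forall>n. 0 < w n \<and> w n \<le> B" shows "\<forall>n. 0 \<le> (w n)\<^sup>2 \<and> (w n)\<^sup>2 \<le> B\<^sup>2"
proof (intro allI conjI)
  fix n
  from assms have a: "0 < w n" "w n \<le> B" by auto
  show "0 \<le> (w n)\<^sup>2" by simp
  show "(w n)\<^sup>2 \<le> B\<^sup>2" using a by (intro power_mono) auto
qed

lemma wshift_l2:
  assumes "\<forall>n. 0 < w n \<and> w n \<le> B" "x \<in> l2"
  shows "wshift w x \<in> l2" "(l2_norm (wshift w x))\<^sup>2 = (\<Sum>n. (w n)\<^sup>2 * (cmod (x n))\<^sup>2)"
    "summable (\<lambda>n. (w n)\<^sup>2 * (cmod (x n))\<^sup>2)"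
proof -
  show s: "summable (\<lambda>n. (w n)\<^sup>2 * (cmod (x n))\<^sup>2)"
    using wsum_summable[OF assms(2) bnd_sq[OF assms(1)]] .
  then have "(\<lambda>n. (w n)\<^sup>2 * (cmod (x n))\<^sup>2) sums (\<Sum>n. (w n)\<^sup>2 * (cmod (x n))\<^sup>2)"
    by (rule summable_sums)
  then have "(\<lambda>n. (cmod (wshift w x n))\<^sup>2) sums (\<Sum>n. (w n)\<^sup>2 * (cmod (x n))\<^sup>2)"
    using wshift_sums_iff by blast
  then show "wshift w x \<in> l2" "(l2_norm (wshift w x))\<^sup>2 = (\<Sum>n. (w n)\<^sup>2 * (cmod (x n))\<^sup>2)"
    by (auto simp: l2_def sums_iff l2_norm_sq)
qed

lemma wshift_norm_le:
  assumes "\<forall>n. 0 < w n \<and> w n \<le> B" "x \<in> l2"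
  shows "l2_norm (wshift w x) \<le> B * l2_norm x"
proof -
  have B0: "B \<ge> 0" using assms(1) by (meson less_le_trans less_imp_le)
  have "(\<Sum>n. (w n)\<^sup>2 * (cmod (x n))\<^sup>2) \<le> (\<Sum>n. B\<^sup>2 * (cmod (x n))\<^sup>2)"
    using wshift_l2(3)[OF assms] assms bnd_sq[OF assms(1)]
    by (intro suminf_le) (auto intro: mult_right_mono summable_mult simp: l2_def)
  also have "\<dots> = (B * l2_norm x)\<^sup>2" using assms(2)
    by (simp add: suminf_mult l2_norm_sq power_mult_distrib l2_def)
  finally have "(l2_norm (wshift w x))\<^sup>2 \<le> (B * l2_norm x)\<^sup>2" using wshift_l2(2)[OF assms] by simp
  then show ?thesis by (rule power2_le_imp_le) (use B0 l2_norm_nonneg[OF assms(2)] in auto)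
qed

lemma wshift_lin: "wshift w (\<lambda>n. a * x n + b * y n) = (\<lambda>n. a * wshift w x n + b * wshift w y n)"
  by (auto simp: wshift_def algebra_simps)

lemma wshift_bounded: assumes "\<forall>n. 0 < w n \<and> w n \<le> B" shows "bounded_op (wshift w)"
  unfolding bounded_op_def using wshift_l2(1)[OF assms] wshift_norm_le[OF assms] wshift_lin by blast

lemma sadj_l2:
  assumes "\<forall>n. 0 < w n \<and> w n \<le> B" "y \<in> l2"
  shows "sadj w y \<in> l2" "(l2_norm (sadj w y))\<^sup>2 = (\<Sum>n. (w n)\<^sup>2 * (cmod (y (Suc n)))\<^sup>2)"
proof -
  have s: "summable (\<lambda>n. (w n)\<^sup>2 * (cmod (y (Suc n)))\<^sup>2)"
    using wsum_summable[OF l2_Suc[OF assms(2)] bnd_sq[OF assms(1)]] .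
  moreover have "(\<lambda>n. (cmod (sadj w y n))\<^sup>2) = (\<lambda>n. (w n)\<^sup>2 * (cmod (y (Suc n)))\<^sup>2)"
    by (simp add: sadj_def norm_mult power_mult_distrib)
  ultimately show "sadj w y \<in> l2" "(l2_norm (sadj w y))\<^sup>2 = (\<Sum>n. (w n)\<^sup>2 * (cmod (y (Suc n)))\<^sup>2)"
    by (auto simp: l2_def l2_norm_sq)
qed

lemma inner_summable:
  assumes "x \<in> l2" "y \<in> l2" "\<forall>n. \<bar>a n\<bar> \<le> K"
  shows "summable (\<lambda>n. x n * cnj (y n) * of_real (a n))"
proof (rule summable_comparison_test')
  show "summable (\<lambda>n. K * ((cmod (x n))\<^sup>2 + (cmod (y n))\<^sup>2))"
    using assms by (intro summable_mult summable_add) (auto simp: l2_def)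
  fix n
  have K0: "K \<ge> 0" using assms(3) by (meson abs_ge_zero order_trans)
  have "cmod (x n) * cmod (y n) \<le> (cmod (x n))\<^sup>2 + (cmod (y n))\<^sup>2"
  proof -
    have "0 \<le> (cmod (x n) - cmod (y n))\<^sup>2" by simp
    moreover have "0 \<le> cmod (x n) * cmod (y n)" by simp
    show ?thesis
    proof (cases "cmod (x n) \<le> cmod (y n)")
      case True
      then have "cmod (x n) * cmod (y n) \<le> cmod (y n) * cmod (y n)" by (simp add: mult_right_mono)
      then show ?thesis by (simp add: power2_eq_square add_increasing)
    next
      case False
      then have "cmod (x n) * cmod (y n) \<le> cmod (x n) * cmod (x n)" by (simp add: mult_left_mono)
      then show ?thesis by (simp add: power2_eq_square add_increasing2)
    qed
  qed
  then show "norm (x n * cnj (y n) * of_real (a n)) \<le> K * ((cmod (x n))\<^sup>2 + (cmod (y n))\<^sup>2)"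
  proof -
    have "norm (x n * cnj (y n) * of_real (a n)) = (cmod (x n) * cmod (y n)) * \<bar>a n\<bar>"
      by (simp add: norm_mult)
    also have "\<dots> \<le> ((cmod (x n))\<^sup>2 + (cmod (y n))\<^sup>2) * K"
      by (rule mult_mono) (use \<open>cmod (x n) * cmod (y n) \<le> _\<close> assms(3) in auto)
    finally show ?thesis by (simp add: mult.commute)
  qed
qed

lemma wshift_adjoint:
  assumes "\<forall>n. 0 < w n \<and> w n \<le> B"
  shows "is_adjoint (wshift w) (sadj w)"
  unfolding is_adjoint_def
proof (intro conjI ballI)
  fix y assume "y \<in> l2" then show "sadj w y \<in> l2" using sadj_l2[OF assms] by blast
next
  fix x y assume xy: "x \<in> l2" "y \<in> l2"
  define f where "f n = wshift w x n * cnj (y n)" for n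
  have fs: "(\<lambda>n. f (Suc n)) = (\<lambda>n. x n * cnj (sadj w y n))"
    by (auto simp: f_def sadj_def)
  have wb: "\<forall>n. \<bar>w n\<bar> \<le> B"
  proof
    fix n show "\<bar>w n\<bar> \<le> B" using assms[rule_format, of n] by simp
  qed
  have "summable (\<lambda>n. x n * cnj (y (Suc n)) * of_real (w n))"
    using inner_summable[OF xy(1) l2_Suc[OF xy(2)] wb] .
  moreover have "(\<lambda>n. x n * cnj (y (Suc n)) * of_real (w n)) = (\<lambda>n. f (Suc n))"
    unfolding fs by (auto simp: sadj_def)
  ultimately have "summable (\<lambda>n. f (Suc n))" by simp
  then have "(\<lambda>n. f (Suc n)) sums (\<Sum>n. f (Suc n))" by (rule summable_sums)
  then have "f sums (\<Sum>n. f (Suc n))" using sums_Suc_iff[of f] by (simp add: f_def)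
  have "l2_inner (wshift w x) y = suminf f" unfolding l2_inner_def f_def ..
  also have "suminf f = (\<Sum>n. f (Suc n))" using \<open>f sums _\<close> by (simp add: sums_iff)
  also have "\<dots> = l2_inner x (sadj w y)" unfolding fs l2_inner_def ..
  finally show "l2_inner (wshift w x) y = l2_inner x (sadj w y)" .
qed

lemma adj_wshift:
  assumes "\<forall>n. 0 < w n \<and> w n \<le> B" "y \<in> l2"
  shows "adj (wshift w) y = sadj w y"
proof -
  have a: "is_adjoint (wshift w) (adj (wshift w))"
    using wshift_adjoint[OF assms(1)] unfolding adj_def by (rule someI[of "is_adjoint (wshift w)"])
  have b: "is_adjoint (wshift w) (sadj w)" by (rule wshift_adjoint[OF assms(1)])
  show ?thesis
  proof
    fix k
    have "cnj (adj (wshift w) y k) = l2_inner (wshift w (ee k)) y"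
      using a assms(2) ee_l2 by (simp add: is_adjoint_def inner_ee_left)
    also have "\<dots> = cnj (sadj w y k)"
      using b assms(2) ee_l2 by (simp add: is_adjoint_def inner_ee_left)
    finally show "adj (wshift w) y k = sadj w y k" by simp
  qed
qed

lemma W_pow_low: "n < k \<Longrightarrow> (wshift w ^^ k) x n = 0"
proof (induction k arbitrary: n)
  case 0 then show ?case by simp
next
  case (Suc k)
  show ?case
  proof (cases n)
    case 0 then show ?thesis by simp
  next
    case (Suc m) then show ?thesis using Suc.IH Suc.prems by simp
  qed
qed

lemma W_pow_high: "(wshift w ^^ k) x (n + k) = of_real (\<Prod>i<k. w (n+i)) * x n"
proof (induction k)
  case 0 then show ?case by simp
next
  case (Suc k)
  have "(wshift w ^^ Suc k) x (n + Suc k) = of_real (w (n+k)) * (wshift w ^^ k) x (n + k)"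
    by simp
  also have "\<dots> = of_real (\<Prod>i<Suc k. w (n+i)) * x n" using Suc by (simp add: mult.commute mult.left_commute)
  finally show ?case .
qed

lemma sadj_pow: "(sadj w ^^ k) y n = of_real (\<Prod>i<k. w (n+i)) * y (n+k)"
proof (induction k arbitrary: n)
  case 0 then show ?case by simp
next
  case (Suc k)
  have "(sadj w ^^ Suc k) y n = of_real (w n) * (sadj w ^^ k) y (Suc n)"
    by (simp add: sadj_def)
  also have "\<dots> = of_real (w n * (\<Prod>i<k. w (Suc n+i))) * y (n + Suc k)" using Suc by simp
  also have "w n * (\<Prod>i<k. w (Suc n+i)) = (\<Prod>i<Suc k. w (n+i))"
    by (simp add: prod.lessThan_Suc_shift del: prod.lessThan_Suc)
  finally show ?case .
qed

lemma W_pow_l2: assumes "\<forall>n. 0 < w n \<and> w n \<le> B" "x \<in> l2" shows "(wshift w ^^ k) x \<in> l2"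
  by (induction k) (use assms wshift_l2 in auto)

lemma adj_pow: assumes "\<forall>n. 0 < w n \<and> w n \<le> B" "y \<in> l2"
  shows "(adj (wshift w) ^^ k) y = (sadj w ^^ k) y \<and> (sadj w ^^ k) y \<in> l2"
proof (induction k)
  case 0 then show ?case using assms by simp
next
  case (Suc k)
  then show ?case using adj_wshift[OF assms(1)] sadj_l2(1)[OF assms(1)] by simp
qed

lemma SW_pow: "(sadj w ^^ k) ((wshift w ^^ k) x) n = of_real (\<Prod>i<k. (w (n+i))\<^sup>2) * x n"
  using W_pow_high[where w=w and k=k and x=x and n=n] by (simp add: sadj_pow add.commute power2_eq_square prod.distrib)

lemma miso_iff:
  assumes "\<forall>n. 0 < w n \<and> w n \<le> B"
  shows "m_isometry m (wshift w) \<longleftrightarrow>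
     (\<forall>n. (\<Sum>k\<le>m. (-1)^k * real (m choose k) * (\<Prod>i<k. (w (n+i))\<^sup>2)) = 0)"
proof -
  define c where "c n = (\<Sum>k\<le>m. (-1)^k * real (m choose k) * (\<Prod>i<k. (w (n+i))\<^sup>2))" for n
  have coord: "(\<Sum>k\<le>m. (-1)^k * of_nat (m choose k) * ((adj (wshift w) ^^ k) ((wshift w ^^ k) x)) n)
      = of_real (c n) * x n" if "x \<in> l2" for x n
  proof -
    have "(\<Sum>k\<le>m. (-1)^k * of_nat (m choose k) * ((adj (wshift w) ^^ k) ((wshift w ^^ k) x)) n)
       = (\<Sum>k\<le>m. (-1)^k * of_nat (m choose k) * (of_real (\<Prod>i<k. (w (n+i))\<^sup>2) * x n))"
      using adj_pow[OF assms W_pow_l2[OF assms that]] SW_pow by (intro sum.cong) auto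
    also have "\<dots> = of_real (c n) * x n" unfolding c_def
      by (simp add: sum_distrib_right mult.assoc)
    finally show ?thesis .
  qed
  have "m_isometry m (wshift w) \<longleftrightarrow> (\<forall>n. c n = 0)"
  proof
    assume mi: "m_isometry m (wshift w)"
    show "\<forall>n. c n = 0"
    proof
      fix n
      have "(\<lambda>j. \<Sum>k\<le>m. (-1)^k * of_nat (m choose k) * ((adj (wshift w) ^^ k) ((wshift w ^^ k) (ee n))) j) = (\<lambda>_. 0)"
        using mi ee_l2 unfolding m_isometry_def by blast
      then have "(\<Sum>k\<le>m. (-1)^k * of_nat (m choose k) * ((adj (wshift w) ^^ k) ((wshift w ^^ k) (ee n))) n) = 0"
        by (metis (mono_tags))
      then show "c n = 0" using coord[OF ee_l2, of n n] by (simp add: ee_def)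
    qed
  next
    assume c0: "\<forall>n. c n = 0"
    show "m_isometry m (wshift w)"
      unfolding m_isometry_def using wshift_bounded[OF assms] coord c0 by auto
  qed
  then show ?thesis by (simp add: c_def)
qed

lemma mult_l2:
  assumes "x \<in> l2" "\<forall>n. \<bar>c n\<bar> \<le> K"
  shows "(\<lambda>n. of_real (c n) * x n) \<in> l2" "l2_norm (\<lambda>n. of_real (c n) * x n) \<le> K * l2_norm x"
    "(l2_norm (\<lambda>n. of_real (c n) * x n))\<^sup>2 = (\<Sum>n. (c n)\<^sup>2 * (cmod (x n))\<^sup>2)"
proof -
  have K0: "K \<ge> 0" using assms(2) by (meson abs_ge_zero order_trans)
  have cb: "\<forall>n. 0 \<le> (c n)\<^sup>2 \<and> (c n)\<^sup>2 \<le> K\<^sup>2"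
  proof
    fix n show "0 \<le> (c n)\<^sup>2 \<and> (c n)\<^sup>2 \<le> K\<^sup>2"
      using power_mono[OF assms(2)[rule_format, of n] abs_ge_zero, of 2] by simp
  qed
  have s: "summable (\<lambda>n. (c n)\<^sup>2 * (cmod (x n))\<^sup>2)" by (rule wsum_summable[OF assms(1) cb])
  have e: "(\<lambda>n. (cmod (of_real (c n) * x n))\<^sup>2) = (\<lambda>n. (c n)\<^sup>2 * (cmod (x n))\<^sup>2)"
    by (simp add: norm_mult power_mult_distrib)
  show l: "(\<lambda>n. of_real (c n) * x n) \<in> l2" using s e by (simp add: l2_def)
  show sq: "(l2_norm (\<lambda>n. of_real (c n) * x n))\<^sup>2 = (\<Sum>n. (c n)\<^sup>2 * (cmod (x n))\<^sup>2)"
    using l2_norm_sq[OF l] e by simp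
  have "(\<Sum>n. (c n)\<^sup>2 * (cmod (x n))\<^sup>2) \<le> (\<Sum>n. K\<^sup>2 * (cmod (x n))\<^sup>2)"
  proof (rule suminf_le)
    fix n show "(c n)\<^sup>2 * (cmod (x n))\<^sup>2 \<le> K\<^sup>2 * (cmod (x n))\<^sup>2" using cb by (simp add: mult_right_mono)
  next
    show "summable (\<lambda>n. (c n)\<^sup>2 * (cmod (x n))\<^sup>2)" by (rule s)
    show "summable (\<lambda>n. K\<^sup>2 * (cmod (x n))\<^sup>2)" using assms(1) by (intro summable_mult) (simp add: l2_def)
  qed
  also have "\<dots> = (K * l2_norm x)\<^sup>2" using assms(1)
    by (simp add: suminf_mult l2_norm_sq power_mult_distrib l2_def)
  finally have "(l2_norm (\<lambda>n. of_real (c n) * x n))\<^sup>2 \<le> (K * l2_norm x)\<^sup>2" using sq by simp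
  then show "l2_norm (\<lambda>n. of_real (c n) * x n) \<le> K * l2_norm x"
    by (rule power2_le_imp_le) (use K0 l2_norm_nonneg[OF assms(1)] in auto)
qed

lemma l2_norm_le_sq: "x \<in> l2 \<Longrightarrow> y \<in> l2 \<Longrightarrow> l2_norm x \<le> l2_norm y \<longleftrightarrow> (l2_norm x)\<^sup>2 \<le> (l2_norm y)\<^sup>2"
  using l2_norm_nonneg by (meson power2_le_imp_le power_mono)

lemma norm_cond_iff:
  assumes "\<forall>n. 0 < w n \<and> w n \<le> B"
  shows "(\<forall>x\<in>l2. l2_norm x \<le> l2_norm (wshift w x)) \<longleftrightarrow> (\<forall>n. 1 \<le> w n)"
proof
  assume h: "\<forall>x\<in>l2. l2_norm x \<le> l2_norm (wshift w x)"
  show "\<forall>n. 1 \<le> w n"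
  proof
    fix k
    have "l2_norm (ee k) \<le> l2_norm (wshift w (ee k))" using h ee_l2 by blast
    then have "(l2_norm (ee k))\<^sup>2 \<le> (l2_norm (wshift w (ee k)))\<^sup>2"
      using l2_norm_le_sq ee_l2 wshift_l2(1)[OF assms ee_l2] by blast
    then have "1 \<le> (w k)\<^sup>2" using wshift_l2(2)[OF assms ee_l2, of k] ee_norm suminf_weight_ee
      by simp
    then show "1 \<le> w k" using assms by (metis abs_of_pos one_le_power abs_le_square_iff power_one abs_one)
  qed
next
  assume h: "\<forall>n. 1 \<le> w n"
  show "\<forall>x\<in>l2. l2_norm x \<le> l2_norm (wshift w x)"
  proof
    fix x assume x: "x \<in> l2"
    have "(\<Sum>n. (cmod (x n))\<^sup>2) \<le> (\<Sum>n. (w n)\<^sup>2 * (cmod (x n))\<^sup>2)"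
    proof (rule suminf_le)
      fix n
      have "1 \<le> (w n)\<^sup>2" using h by (metis one_le_power)
      then show "(cmod (x n))\<^sup>2 \<le> (w n)\<^sup>2 * (cmod (x n))\<^sup>2"
        using mult_right_mono[of 1 "(w n)\<^sup>2" "(cmod (x n))\<^sup>2"] by simp
    qed (use x wshift_l2(3)[OF assms x] in \<open>auto simp: l2_def\<close>)
    then have "(l2_norm x)\<^sup>2 \<le> (l2_norm (wshift w x))\<^sup>2"
      using l2_norm_sq[OF x] wshift_l2(2)[OF assms x] by simp
    then show "l2_norm x \<le> l2_norm (wshift w x)"
      using l2_norm_le_sq[OF x wshift_l2(1)[OF assms x]] by simp
  qed
qed

lemma left_inv:
  assumes "\<forall>n. 0 < w n \<and> w n \<le> B" "\<forall>n. 1 \<le> w n"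
  shows "left_invertible (wshift w)"
proof -
  define L where "L y = (\<lambda>n. of_real (1 / w n) * y (Suc n))" for y :: seq
  have c: "\<forall>n. \<bar>1 / w n\<bar> \<le> 1"
  proof
    fix n have "1 \<le> w n" using assms(2) by blast
    then show "\<bar>1 / w n\<bar> \<le> 1" by simp
  qed
  have "bounded_op L"
    unfolding bounded_op_def
  proof (intro conjI ballI allI)
    fix x assume "x \<in> l2"
    then show "L x \<in> l2" unfolding L_def using mult_l2(1)[OF l2_Suc c] by blast
  next
    fix x y a b show "L (\<lambda>n. a * x n + b * y n) = (\<lambda>n. a * L x n + b * L y n)"
      by (auto simp: L_def algebra_simps)
  next
    show "\<exists>C. \<forall>x\<in>l2. l2_norm (L x) \<le> C * l2_norm x"
    proof (intro exI ballI)
      fix x assume x: "x \<in> l2"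
      have "l2_norm (L x) \<le> 1 * l2_norm (\<lambda>n. x (Suc n))"
        unfolding L_def using mult_l2(2)[OF l2_Suc[OF x] c] .
      also have "\<dots> \<le> l2_norm x"
      proof -
        have s: "summable (\<lambda>n. (cmod (x n))\<^sup>2)" using x by (simp add: l2_def)
        have "(\<Sum>n. (cmod (x (Suc n)))\<^sup>2) \<le> (\<Sum>n. (cmod (x n))\<^sup>2)"
          using suminf_split_head[OF s] by simp
        then show ?thesis unfolding l2_norm_def by simp
      qed
      finally show "l2_norm (L x) \<le> 1 * l2_norm x" by simp
    qed
  qed
  moreover have "\<forall>x\<in>l2. L (wshift w x) = x"
  proof (intro ballI ext)
    fix x :: seq and n
    have "w n \<noteq> 0" using assms(1) by (metis less_irrefl)
    then show "L (wshift w x) n = x n" by (simp add: L_def)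
  qed
  ultimately show ?thesis unfolding left_invertible_def using wshift_bounded[OF assms(1)] by blast
qed

lemma AW: assumes "\<forall>n. 0 < w n \<and> w n \<le> B" "v \<in> l2"
  shows "(adj (wshift w) \<circ> wshift w) v = (\<lambda>n. of_real ((w n)\<^sup>2) * v n)"
  using adj_wshift[OF assms(1) wshift_l2(1)[OF assms]]
  by (auto simp: sadj_def power2_eq_square)

lemma op_inv_W:
  assumes "\<forall>n. 0 < w n \<and> w n \<le> B" "\<forall>n. 1 \<le> w n" "z \<in> l2"
  shows "op_inv (adj (wshift w) \<circ> wshift w) z = (\<lambda>n. of_real (1 / (w n)\<^sup>2) * z n)"
proof -
  let ?A = "adj (wshift w) \<circ> wshift w"
  define D where "D x = (\<lambda>n. of_real (1 / (w n)\<^sup>2) * x n)" for x :: seq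
  have c: "\<forall>n. \<bar>1 / (w n)\<^sup>2\<bar> \<le> 1"
  proof
    fix n have "1 \<le> (w n)\<^sup>2" using assms(2) by (metis one_le_power)
    then show "\<bar>1 / (w n)\<^sup>2\<bar> \<le> 1" by (simp add: divide_le_eq_1)
  qed
  have wne: "w n \<noteq> 0" for n using assms(1) by (metis less_irrefl)
  have bD: "bounded_op D"
    unfolding bounded_op_def
  proof (intro conjI ballI allI)
    fix x assume "x \<in> l2"
    then show "D x \<in> l2" unfolding D_def using mult_l2(1)[OF _ c] by blast
  next
    fix x y a b show "D (\<lambda>n. a * x n + b * y n) = (\<lambda>n. a * D x n + b * D y n)"
      by (auto simp: D_def algebra_simps add_divide_distrib)
  next
    show "\<exists>C. \<forall>x\<in>l2. l2_norm (D x) \<le> C * l2_norm x"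
      using mult_l2(2)[OF _ c] unfolding D_def by blast
  qed
  have DinL: "x \<in> l2 \<Longrightarrow> D x \<in> l2" for x using bD unfolding bounded_op_def by blast
  have "\<forall>x\<in>l2. ?A (D x) = x \<and> D (?A x) = x"
  proof
    fix x assume x: "x \<in> l2"
    show "?A (D x) = x \<and> D (?A x) = x"
      using AW[OF assms(1) DinL[OF x]] AW[OF assms(1) x] wne
      by (auto simp: D_def power2_eq_square)
  qed
  with bD have ex: "bounded_op D \<and> (\<forall>x\<in>l2. ?A (D x) = x \<and> D (?A x) = x)" by blast
  define Bo where "Bo = op_inv ?A"
  have "bounded_op Bo \<and> (\<forall>x\<in>l2. ?A (Bo x) = x \<and> Bo (?A x) = x)"
    unfolding Bo_def op_inv_def using ex by (rule someI[of "\<lambda>B. bounded_op B \<and> (\<forall>x\<in>l2. ?A (B x) = x \<and> B (?A x) = x)"])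
  then have "Bo z \<in> l2" "?A (Bo z) = z" using assms(3) unfolding bounded_op_def by auto
  then have "(\<lambda>n. of_real ((w n)\<^sup>2) * Bo z n) = z" using AW[OF assms(1)] by metis
  then have "Bo z = D z"
    unfolding D_def using wne by (auto simp: fun_eq_iff field_simps)
  then show ?thesis unfolding Bo_def D_def .
qed

lemma CD_adj:
  assumes "\<forall>n. 0 < w n \<and> w n \<le> B" "\<forall>n. 1 \<le> w n" "x \<in> l2"
  shows "cauchy_dual (wshift w) (adj (wshift w) x) = (\<lambda>n. of_real (if n = 0 then 0 else 1) * x n)"
proof -
  have wne: "w n \<noteq> 0" for n using assms(1) by (metis less_irrefl)
  have "adj (wshift w) x = sadj w x" by (rule adj_wshift[OF assms(1,3)])
  moreover have "sadj w x \<in> l2" by (rule sadj_l2(1)[OF assms(1,3)])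
  ultimately have "cauchy_dual (wshift w) (adj (wshift w) x) =
      wshift w (\<lambda>n. of_real (1 / (w n)\<^sup>2) * (of_real (w n) * x (Suc n)))"
    unfolding cauchy_dual_def using op_inv_W[OF assms(1,2)] by (simp add: sadj_def)
  also have "\<dots> = (\<lambda>n. of_real (if n = 0 then 0 else 1) * x n)"
  proof
    fix n show "wshift w (\<lambda>n. of_real (1 / (w n)\<^sup>2) * (of_real (w n) * x (Suc n))) n =
      of_real (if n = 0 then 0 else 1) * x n"
    proof (cases n)
      case 0 then show ?thesis by simp
    next
      case (Suc k) then show ?thesis using wne[of k] by (simp add: power2_eq_square field_simps)
    qed
  qed
  finally show ?thesis .
qed

lemma CD_W:
  assumes "\<forall>n. 0 < w n \<and> w n \<le> B" "\<forall>n. 1 \<le> w n" "x \<in> l2"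
  shows "cauchy_dual (wshift w) (wshift w x) \<in> l2"
    "(l2_norm (cauchy_dual (wshift w) (wshift w x)))\<^sup>2 = (\<Sum>n. (w n / w (Suc n))\<^sup>2 * (cmod (x n))\<^sup>2)"
    "summable (\<lambda>n. (w n / w (Suc n))\<^sup>2 * (cmod (x n))\<^sup>2)"
proof -
  have wne: "w n \<noteq> 0" for n using assms(1) by (metis less_irrefl)
  have c: "\<forall>n. \<bar>1 / (w n)\<^sup>2\<bar> \<le> 1"
  proof
    fix n have "1 \<le> (w n)\<^sup>2" using assms(2) by (metis one_le_power)
    then show "\<bar>1 / (w n)\<^sup>2\<bar> \<le> 1" by (simp add: divide_le_eq_1)
  qed
  define v where "v = (\<lambda>n. of_real (1 / (w n)\<^sup>2) * wshift w x n)"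
  have Wx: "wshift w x \<in> l2" by (rule wshift_l2(1)[OF assms(1,3)])
  have v: "v \<in> l2" unfolding v_def by (rule mult_l2(1)[OF Wx c])
  have cd: "cauchy_dual (wshift w) (wshift w x) = wshift w v"
    unfolding cauchy_dual_def v_def using op_inv_W[OF assms(1,2) Wx] by simp
  show "cauchy_dual (wshift w) (wshift w x) \<in> l2" unfolding cd by (rule wshift_l2(1)[OF assms(1) v])
  define g where "g n = (w n / w (Suc n))\<^sup>2 * (cmod (x n))\<^sup>2" for n
  have gb: "\<forall>n. 0 \<le> (w n / w (Suc n))\<^sup>2 \<and> (w n / w (Suc n))\<^sup>2 \<le> B\<^sup>2"
  proof
    fix n
    have "w n / w (Suc n) \<le> w n" using assms(2)[rule_format, of "Suc n"] assms(1)[rule_format, of n]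
      by (simp add: divide_le_eq_1 divide_le_cancel mult_le_cancel_left1 pos_divide_le_eq)
    then have "w n / w (Suc n) \<le> B" using assms(1) by (meson order_trans)
    moreover have "0 \<le> w n / w (Suc n)" using assms(1) by (simp add: less_imp_le)
    ultimately show "0 \<le> (w n / w (Suc n))\<^sup>2 \<and> (w n / w (Suc n))\<^sup>2 \<le> B\<^sup>2"
      by (simp add: power_mono)
  qed
  show gs: "summable (\<lambda>n. (w n / w (Suc n))\<^sup>2 * (cmod (x n))\<^sup>2)"
    by (rule wsum_summable[OF assms(3) gb])
  have h: "(\<lambda>n. (w n)\<^sup>2 * (cmod (v n))\<^sup>2) = (\<lambda>n. if n = 0 then 0 else g (n - 1))"
  proof
    fix n show "(w n)\<^sup>2 * (cmod (v n))\<^sup>2 = (if n = 0 then 0 else g (n - 1))"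
    proof (cases n)
      case 0 then show ?thesis by (simp add: v_def)
    next
      case (Suc k)
      have pk: "w k > 0" "w (Suc k) > 0" using assms(1) by auto
      have nv: "cmod (v (Suc k)) = w k / (w (Suc k))\<^sup>2 * cmod (x k)"
        using pk by (simp add: v_def norm_mult norm_divide norm_power)
      have "(w (Suc k))\<^sup>2 * (cmod (v (Suc k)))\<^sup>2 = (w (Suc k))\<^sup>2 * (w k / (w (Suc k))\<^sup>2)\<^sup>2 * (cmod (x k))\<^sup>2"
        unfolding nv power_mult_distrib by simp
      also have "\<dots> = g k" unfolding g_def using pk by (simp add: power_divide power2_eq_square field_simps)
      finally show ?thesis using Suc by simp
    qed
  qed
  have "g sums (\<Sum>n. g n)" using gs unfolding g_def by (rule summable_sums)
  then have "(\<lambda>n. if n = 0 then 0 else g (n - 1)) sums (\<Sum>n. g n)"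
    using sums_Suc_iff[of "\<lambda>n. if n = 0 then 0 else g (n - 1)"] by simp
  then have "(\<Sum>n. (w n)\<^sup>2 * (cmod (v n))\<^sup>2) = (\<Sum>n. g n)" unfolding h by (simp add: sums_iff)
  then show "(l2_norm (cauchy_dual (wshift w) (wshift w x)))\<^sup>2 = (\<Sum>n. (w n / w (Suc n))\<^sup>2 * (cmod (x n))\<^sup>2)"
    unfolding cd wshift_l2(2)[OF assms(1) v] g_def .
qed

lemma dual_cond_iff:
  assumes "\<forall>n. 0 < w n \<and> w n \<le> B" "\<forall>n. 1 \<le> w n"
  shows "(\<forall>x\<in>l2. l2_norm (cauchy_dual (wshift w) (adj (wshift w) x)) \<le> l2_norm (cauchy_dual (wshift w) (wshift w x)))
     \<longleftrightarrow> (\<forall>n\<ge>1. w (Suc n) \<le> w n)"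
proof -
  define e where "e n = (if n = 0 then 0 else 1::real)" for n :: nat
  have e1: "\<forall>n. \<bar>e n\<bar> \<le> 1" by (simp add: e_def)
  have key: "l2_norm (cauchy_dual (wshift w) (adj (wshift w) x)) \<le> l2_norm (cauchy_dual (wshift w) (wshift w x))
      \<longleftrightarrow> (\<Sum>n. (e n)\<^sup>2 * (cmod (x n))\<^sup>2) \<le> (\<Sum>n. (w n / w (Suc n))\<^sup>2 * (cmod (x n))\<^sup>2)"
    if x: "x \<in> l2" for x
  proof -
    have a: "cauchy_dual (wshift w) (adj (wshift w) x) = (\<lambda>n. of_real (e n) * x n)"
      unfolding e_def by (rule CD_adj[OF assms x])
    show ?thesis unfolding a
      using l2_norm_le_sq[OF mult_l2(1)[OF x e1] CD_W(1)[OF assms x]] mult_l2(3)[OF x e1] CD_W(2)[OF assms x]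
      by simp
  qed
  show ?thesis
  proof
    assume h: "\<forall>x\<in>l2. l2_norm (cauchy_dual (wshift w) (adj (wshift w) x)) \<le> l2_norm (cauchy_dual (wshift w) (wshift w x))"
    show "\<forall>n\<ge>1. w (Suc n) \<le> w n"
    proof (intro allI impI)
      fix k :: nat assume k: "k \<ge> 1"
      have "(\<Sum>n. (e n)\<^sup>2 * (cmod (ee k n))\<^sup>2) \<le> (\<Sum>n. (w n / w (Suc n))\<^sup>2 * (cmod (ee k n))\<^sup>2)"
        using key[OF ee_l2] h ee_l2 by blast
      then have "1 \<le> (w k / w (Suc k))\<^sup>2" unfolding suminf_weight_ee using k by (simp add: e_def)
      then have "1 \<le> w k / w (Suc k)" using assms(1)
        by (metis abs_le_square_iff abs_of_nonneg abs_one divide_nonneg_pos less_imp_le power_one)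
      moreover have "w (Suc k) > 0" using assms(1) by blast
      ultimately show "w (Suc k) \<le> w k" by (simp add: le_divide_eq_1)
    qed
  next
    assume h: "\<forall>n\<ge>1. w (Suc n) \<le> w n"
    show "\<forall>x\<in>l2. l2_norm (cauchy_dual (wshift w) (adj (wshift w) x)) \<le> l2_norm (cauchy_dual (wshift w) (wshift w x))"
    proof
      fix x assume x: "x \<in> l2"
      have "(\<Sum>n. (e n)\<^sup>2 * (cmod (x n))\<^sup>2) \<le> (\<Sum>n. (w n / w (Suc n))\<^sup>2 * (cmod (x n))\<^sup>2)"
      proof (rule suminf_le)
        fix n
        have "(e n)\<^sup>2 \<le> (w n / w (Suc n))\<^sup>2"
        proof (cases "n = 0")
          case True then show ?thesis by (simp add: e_def)
        next
          case False
          then have "w (Suc n) \<le> w n" using h by simp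
          then have "1 \<le> w n / w (Suc n)" using assms(1) by (simp add: le_divide_eq_1)
          then have "1 \<le> (w n / w (Suc n))\<^sup>2" by (metis one_le_power)
          then show ?thesis using False by (simp add: e_def)
        qed
        then show "(e n)\<^sup>2 * (cmod (x n))\<^sup>2 \<le> (w n / w (Suc n))\<^sup>2 * (cmod (x n))\<^sup>2"
          by (simp add: mult_right_mono)
      next
        show "summable (\<lambda>n. (e n)\<^sup>2 * (cmod (x n))\<^sup>2)"
          using wsum_summable[OF x, of "\<lambda>n. (e n)\<^sup>2" 1] by (simp add: e_def)
        show "summable (\<lambda>n. (w n / w (Suc n))\<^sup>2 * (cmod (x n))\<^sup>2)" by (rule CD_W(3)[OF assms x])
      qed
      then show "l2_norm (cauchy_dual (wshift w) (adj (wshift w) x)) \<le> l2_norm (cauchy_dual (wshift w) (wshift w x))"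
        using key[OF x] by simp
    qed
  qed
qed

lemma W_pow_norm:
  assumes "\<forall>n. 0 < w n \<and> w n \<le> B" "x \<in> l2"
  shows "l2_norm ((wshift w ^^ i) x) \<le> B^i * l2_norm x"
proof (induction i)
  case 0 then show ?case by simp
next
  case (Suc i)
  have B0: "B \<ge> 0" using assms(1) by (meson less_le_trans less_imp_le)
  have "l2_norm ((wshift w ^^ Suc i) x) \<le> B * l2_norm ((wshift w ^^ i) x)"
    using wshift_norm_le[OF assms(1) W_pow_l2[OF assms]] by simp
  also have "\<dots> \<le> B * (B^i * l2_norm x)" using Suc B0 by (simp add: mult_left_mono)
  finally show ?case by (simp add: mult.assoc)
qed

lemma pow_diff_bound:
  assumes "\<forall>n. 0 < w n \<and> w n \<le> B"
  shows "\<exists>K. \<forall>x\<in>l2. l2_norm (\<lambda>n. (wshift w ^^ j) x n - c^j * x n) \<le> K * l2_norm (\<lambda>n. wshift w x n - c * x n)"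
proof (induction j)
  case 0
  show ?case by (intro exI[of _ 0] ballI) (simp add: l2_norm_def)
next
  case (Suc j)
  then obtain K where K: "\<forall>x\<in>l2. l2_norm (\<lambda>n. (wshift w ^^ j) x n - c^j * x n) \<le> K * l2_norm (\<lambda>n. wshift w x n - c * x n)"
    by blast
  have B0: "B \<ge> 0" using assms(1) by (meson less_le_trans less_imp_le)
  show ?case
  proof (intro exI[of _ "B * K + cmod c ^ j"] ballI)
    fix x assume x: "x \<in> l2"
    define u where "u = (\<lambda>n. (wshift w ^^ j) x n - c^j * x n)"
    define y where "y = (\<lambda>n. wshift w x n - c * x n)"
    have Wjx: "(wshift w ^^ j) x \<in> l2" by (rule W_pow_l2[OF assms x])
    have Wx: "wshift w x \<in> l2" by (rule wshift_l2(1)[OF assms x])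
    have u: "u \<in> l2" unfolding u_def by (rule l2_diff[OF Wjx l2_scale(1)[OF x]])
    have y: "y \<in> l2" unfolding y_def by (rule l2_diff[OF Wx l2_scale(1)[OF x]])
    have Wu: "wshift w u \<in> l2" by (rule wshift_l2(1)[OF assms u])
    have cy: "(\<lambda>n. c^j * y n) \<in> l2" by (rule l2_scale(1)[OF y])
    have eq: "(\<lambda>n. (wshift w ^^ Suc j) x n - c^(Suc j) * x n) = (\<lambda>n. wshift w u n + c^j * y n)"
    proof
      fix n show "(wshift w ^^ Suc j) x n - c^(Suc j) * x n = wshift w u n + c^j * y n"
        by (cases n) (simp_all add: u_def y_def algebra_simps)
    qed
    have "l2_norm (\<lambda>n. (wshift w ^^ Suc j) x n - c^(Suc j) * x n) \<le> l2_norm (wshift w u) + l2_norm (\<lambda>n. c^j * y n)"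
      unfolding eq by (rule l2_triangle[OF Wu cy])
    also have "\<dots> \<le> B * l2_norm u + cmod c ^ j * l2_norm y"
      using wshift_norm_le[OF assms u] l2_scale(2)[OF y, of "c^j"] by (simp add: norm_power)
    also have "\<dots> \<le> B * (K * l2_norm y) + cmod c ^ j * l2_norm y"
      using K x B0 unfolding u_def y_def by (simp add: mult_left_mono)
    also have "\<dots> = (B * K + cmod c ^ j) * l2_norm y" by (simp add: algebra_simps)
    finally show "l2_norm (\<lambda>n. (wshift w ^^ Suc j) x n - c^(Suc j) * x n) \<le> (B * K + cmod c ^ j) * l2_norm (\<lambda>n. wshift w x n - c * x n)"
      unfolding y_def .
  qed
qed

lemma ap_spec_sub:
  assumes "\<forall>n. 0 < w n \<and> w n \<le> B" "\<forall>n. 1 \<le> w n"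
    and H: "\<forall>r>1. \<exists>j M. M < r^j \<and> (\<forall>z\<in>l2. l2_norm ((wshift w ^^ j) z) \<le> M * l2_norm z)"
  shows "ap_spec (wshift w) \<subseteq> {z. cmod z = 1}"
proof
  fix c assume "c \<in> ap_spec (wshift w)"
  then obtain x :: "nat \<Rightarrow> seq" where x: "\<forall>k. x k \<in> l2 \<and> l2_norm (x k) = 1"
    and lim: "(\<lambda>k. l2_norm (\<lambda>n. wshift w (x k) n - c * x k n)) \<longlonglongrightarrow> 0"
    unfolding ap_spec_def by blast
  define d where "d k = l2_norm (\<lambda>n. wshift w (x k) n - c * x k n)" for k
  have lim': "d \<longlonglongrightarrow> 0" using lim unfolding d_def .
  have nc: "\<forall>z\<in>l2. l2_norm z \<le> l2_norm (wshift w z)" using norm_cond_iff[OF assms(1)] assms(2) by blast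
  show "c \<in> {z. cmod z = 1}"
  proof (rule ccontr)
    assume "c \<notin> {z. cmod z = 1}"
    then have "cmod c < 1 \<or> cmod c > 1" by auto
    then show False
    proof
      assume c1: "cmod c < 1"
      have "1 - cmod c \<le> d k" for k
      proof -
        have xk: "x k \<in> l2" "l2_norm (x k) = 1" using x by auto
        have "l2_norm (wshift w (x k)) - l2_norm (\<lambda>n. c * x k n) \<le> d k"
          unfolding d_def by (rule l2_rev_triangle[OF wshift_l2(1)[OF assms(1) xk(1)] l2_scale(1)[OF xk(1)]])
        moreover have "l2_norm (\<lambda>n. c * x k n) = cmod c" using l2_scale(2)[OF xk(1)] xk(2) by simp
        moreover have "1 \<le> l2_norm (wshift w (x k))" using nc xk by fastforce
        ultimately show ?thesis by simp
      qed
      moreover have "eventually (\<lambda>k. d k < 1 - cmod c) sequentially"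
        using lim' c1 by (intro order_tendstoD(2)) auto
      ultimately show False by (metis (mono_tags) eventually_sequentially le_refl not_le)
    next
      assume c1: "cmod c > 1"
      obtain j M where jM: "M < (cmod c)^j" "\<forall>z\<in>l2. l2_norm ((wshift w ^^ j) z) \<le> M * l2_norm z"
        using H c1 by blast
      obtain K where K: "\<forall>x\<in>l2. l2_norm (\<lambda>n. (wshift w ^^ j) x n - c^j * x n) \<le> K * l2_norm (\<lambda>n. wshift w x n - c * x n)"
        using pow_diff_bound[OF assms(1)] by blast
      have "(cmod c)^j - M \<le> K * d k" for k
      proof -
        have xk: "x k \<in> l2" "l2_norm (x k) = 1" using x by auto
        have a: "(wshift w ^^ j) (x k) \<in> l2" by (rule W_pow_l2[OF assms(1) xk(1)])
        have b: "(\<lambda>n. (wshift w ^^ j) (x k) n - c^j * x k n) \<in> l2" by (rule l2_diff[OF a l2_scale(1)[OF xk(1)]])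
        have "l2_norm (\<lambda>n. (wshift w ^^ j) (x k) n - ((wshift w ^^ j) (x k) n - c^j * x k n))
            \<le> l2_norm ((wshift w ^^ j) (x k)) + l2_norm (\<lambda>n. (wshift w ^^ j) (x k) n - c^j * x k n)"
          by (rule l2_triangle_diff[OF a b])
        moreover have "(\<lambda>n. (wshift w ^^ j) (x k) n - ((wshift w ^^ j) (x k) n - c^j * x k n)) = (\<lambda>n. c^j * x k n)"
          by simp
        moreover have "l2_norm (\<lambda>n. c^j * x k n) = (cmod c)^j" using l2_scale(2)[OF xk(1)] xk(2) by (simp add: norm_power)
        moreover have "l2_norm ((wshift w ^^ j) (x k)) \<le> M" using jM(2) xk by fastforce
        moreover have "l2_norm (\<lambda>n. (wshift w ^^ j) (x k) n - c^j * x k n) \<le> K * d k"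
          using K xk unfolding d_def by blast
        ultimately show ?thesis by simp
      qed
      moreover have "(\<lambda>k. K * d k) \<longlonglongrightarrow> 0" using tendsto_mult_right_zero[OF lim'] by simp
      then have "eventually (\<lambda>k. K * d k < (cmod c)^j - M) sequentially"
        using jM(1) by (intro order_tendstoD(2)) auto
      ultimately show False by (metis (mono_tags) eventually_sequentially le_refl not_le)
    qed
  qed
qed

definition fd :: "nat \<Rightarrow> (nat \<Rightarrow> real) \<Rightarrow> nat \<Rightarrow> real" where
  "fd m f n = (\<Sum>k\<le>m. (-1)^k * real (m choose k) * f (n+k))"

lemma fd_0[simp]: "fd 0 f n = f n"
  by (simp add: fd_def)

lemma fd_Suc: "fd (Suc m) f n = fd m f n - fd m f (Suc n)"
proof -
  have "fd (Suc m) f n = f n + (\<Sum>k\<le>m. (-1)^(Suc k) * real (Suc m choose Suc k) * f (n + Suc k))"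
    unfolding fd_def by (subst sum.atMost_Suc_shift) simp
  also have "\<dots> = f n + (\<Sum>k\<le>m. (-1)^(Suc k) * real (m choose k) * f (n + Suc k)
       + (-1)^(Suc k) * real (m choose Suc k) * f (n + Suc k))"
    by (simp add: algebra_simps)
  also have "\<dots> = f n + (\<Sum>k\<le>m. (-1)^(Suc k) * real (m choose k) * f (n + Suc k))
       + (\<Sum>k\<le>m. (-1)^(Suc k) * real (m choose Suc k) * f (n + Suc k))"
    by (simp only: sum.distrib add.assoc)
  finally have A: "fd (Suc m) f n = f n + (\<Sum>k\<le>m. (-1)^(Suc k) * real (m choose k) * f (n + Suc k))
       + (\<Sum>k\<le>m. (-1)^(Suc k) * real (m choose Suc k) * f (n + Suc k))" .
  have B: "(\<Sum>k\<le>m. (-1)^(Suc k) * real (m choose k) * f (n + Suc k)) = - fd m f (Suc n)"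
    unfolding fd_def by (simp add: sum_negf[symmetric])
  have C: "f n + (\<Sum>k\<le>m. (-1)^(Suc k) * real (m choose Suc k) * f (n + Suc k)) = fd m f n"
  proof -
    have "fd m f n = (\<Sum>k\<le>Suc m. (-1)^k * real (m choose k) * f (n+k))"
      unfolding fd_def by simp
    also have "\<dots> = f n + (\<Sum>k\<le>m. (-1)^(Suc k) * real (m choose Suc k) * f (n + Suc k))"
      by (subst sum.atMost_Suc_shift) simp
    finally show ?thesis by simp
  qed
  show ?thesis using A B C by linarith
qed

lemma fd_diff: "fd m (\<lambda>n. f n - g n) n = fd m f n - fd m g n"
  unfolding fd_def by (simp add: algebra_simps sum_subtractf)

lemma fd_scale: "fd m (\<lambda>n. c * f n) n = c * fd m f n"
  unfolding fd_def by (simp add: algebra_simps sum_distrib_left)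

lemma fd_Suc': "fd (Suc m) f n = fd m (\<lambda>n. f n - f (Suc n)) n"
proof -
  have "fd m (\<lambda>n. f (Suc n)) n = fd m f (Suc n)" unfolding fd_def by simp
  then show ?thesis by (simp add: fd_Suc fd_diff)
qed

definition pdelta :: "real poly \<Rightarrow> real poly" where
  "pdelta p = p \<circ>\<^sub>p [:1,1:] - p"

lemma poly_pdelta: "poly (pdelta p) x = poly p (x+1) - poly p x"
  by (simp add: pdelta_def poly_pcompose add.commute)

lemma pdelta_degree: "pdelta p = 0 \<or> degree (pdelta p) < degree p"
proof (cases "degree p = 0")
  case True
  then obtain c where "p = [:c:]" by (metis degree_eq_zeroE)
  then show ?thesis by (simp add: pdelta_def)
next
  case False
  have d1: "degree (p \<circ>\<^sub>p [:1,1:]) = degree p" by (simp add: degree_pcompose)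
  have l1: "lead_coeff (p \<circ>\<^sub>p [:1,1:]) = lead_coeff p"
    by (subst lead_coeff_comp) auto
  have dle: "degree (pdelta p) \<le> degree p" unfolding pdelta_def
    by (metis d1 degree_diff_le order_refl)
  have "coeff (pdelta p) (degree p) = 0" unfolding pdelta_def
    using l1 d1 by simp
  then show ?thesis using dle
    by (metis le_neq_implies_less leading_coeff_0_iff)
qed

lemma fd_poly: "degree p < m \<or> p = 0 \<Longrightarrow> fd m (\<lambda>n. poly p (real n)) n = 0"
proof (induction m arbitrary: p n)
  case 0
  then show ?case by simp
next
  case (Suc m)
  have eq: "(\<lambda>n. poly p (real n) - poly p (real (Suc n))) = (\<lambda>n. (-1) * poly (pdelta p) (real n))"
    by (simp add: poly_pdelta algebra_simps)
  show ?case
  proof (cases "pdelta p = 0")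
    case True
    show ?thesis unfolding fd_Suc' eq fd_scale using True by (simp add: fd_def)
  next
    case False
    then have "degree (pdelta p) < degree p" using pdelta_degree by blast
    then have "degree (pdelta p) < m" using Suc.prems by auto
    then show ?thesis unfolding fd_Suc' eq fd_scale using Suc.IH by simp
  qed
qed

lemma pcompose_X_power: "pcompose ([:0,1:]^n) q = q ^ n"
  by (induction n) (simp_all add: pcompose_mult pcompose_pCons pcompose_1)

lemma antideriv: fixes q :: "real poly" shows "\<exists>r. degree r \<le> degree q + 1 \<and> (\<forall>x. poly r (x+1) - poly r x = poly q x)"
proof (induction "degree q" arbitrary: q rule: less_induct)
  case less
  show ?case
  proof (cases "q = 0")
    case True
    then show ?thesis by (intro exI[of _ "0::real poly"]) simp
  next
    case False
    define d where "d = degree q"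
    define h where "h = monom (lead_coeff q / real (d+1)) (d+1)"
    have hdeg: "degree h \<le> d + 1" unfolding h_def by (simp add: degree_monom_le)
    have hcomp: "h \<circ>\<^sub>p [:1,1:] = smult (lead_coeff q / real (d+1)) ([:1,1:] ^ (d+1))"
      unfolding h_def by (simp only: monom_altdef pcompose_smult pcompose_X_power)
    have cp: "coeff ([:1,1:]^(d+1)) d = (real (d+1) :: real)"
      by (subst coeff_linear_poly_power) auto
    have "coeff (pdelta h) d = lead_coeff q"
      unfolding pdelta_def hcomp coeff_diff coeff_smult cp
      by (simp add: h_def d_def coeff_monom del: power_Suc)
    have "pdelta h = 0 \<or> degree (pdelta h) < degree h" by (rule pdelta_degree)
    then have dh: "degree (pdelta h) \<le> d" using hdeg by auto
    define q' where "q' = q - pdelta h"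
    have "degree q' \<le> d" unfolding q'_def using dh d_def by (metis degree_diff_le le_refl)
    moreover have "coeff q' d = 0" unfolding q'_def using \<open>coeff (pdelta h) d = lead_coeff q\<close> d_def by simp
    ultimately have "q' = 0 \<or> degree q' < degree q"
      by (metis d_def le_neq_implies_less leading_coeff_0_iff)
    then obtain r' where r': "degree r' \<le> d" "\<forall>x. poly r' (x+1) - poly r' x = poly q' x"
    proof
      assume "q' = 0" then show ?thesis using that[of 0] by simp
    next
      assume "degree q' < degree q"
      from less[OF this] obtain r where "degree r \<le> degree q' + 1" "\<forall>x. poly r (x+1) - poly r x = poly q' x"
        by blast
      then show ?thesis using that[of r] \<open>degree q' < degree q\<close> d_def by simp
    qed
    show ?thesis
    proof (intro exI[of _ "r' + h"] conjI allI)
      show "degree (r' + h) \<le> degree q + 1" using r'(1) hdeg d_def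
        by (metis degree_add_le le_SucI Suc_eq_plus1)
    next
      fix x
      show "poly (r' + h) (x + 1) - poly (r' + h) x = poly q x"
        using r'(2)[rule_format, of x] poly_pdelta[of h x] unfolding q'_def by (simp add: algebra_simps)
    qed
  qed
qed

lemma fd_zero_poly:
  assumes "\<forall>n. fd m f n = 0"
  shows "\<exists>p. degree p \<le> m - 1 \<and> (\<forall>n. f n = poly p (real n))"
  using assms
proof (induction m arbitrary: f)
  case 0
  then show ?case by (intro exI[of _ 0]) simp
next
  case (Suc m)
  define g where "g = (\<lambda>n. f n - f (Suc n))"
  have "\<forall>n. fd m g n = 0" using Suc.prems unfolding g_def fd_Suc' by simp
  show ?case
  proof (cases "m = 0")
    case True
    then have "\<forall>n. f n = f (Suc n)" using \<open>\<forall>n. fd m g n = 0\<close> unfolding g_def by simp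
    have "f n = f 0" for n
      by (induction n) (use \<open>\<forall>n. f n = f (Suc n)\<close> in auto)
    then have "\<forall>n. f n = f 0" by blast
    then show ?thesis by (intro exI[of _ "[:f 0:]"]) simp
  next
    case False
    from Suc.IH[OF \<open>\<forall>n. fd m g n = 0\<close>] obtain q where q: "degree q \<le> m - 1" "\<forall>n. g n = poly q (real n)"
      by blast
    obtain r where r: "degree r \<le> degree q + 1" "\<forall>x. poly r (x+1) - poly r x = poly q x"
      using antideriv by blast
    have inv: "f n + poly r (real n) = f 0 + poly r 0" for n
    proof (induction n)
      case 0 then show ?case by simp
    next
      case (Suc n)
      have "f (Suc n) = f n - g n" unfolding g_def by simp
      moreover have "poly r (real (Suc n)) = poly r (real n) + poly q (real n)"
        using r(2)[rule_format, of "real n"] by (simp add: add.commute)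
      ultimately show ?case using Suc q(2) by simp
    qed
    show ?thesis
    proof (intro exI[of _ "[:f 0 + poly r 0:] - r"] conjI allI)
      have "degree r \<le> Suc m - 1" using r(1) q(1) False by simp
      then show "degree ([:f 0 + poly r 0:] - r) \<le> Suc m - 1"
        by (metis degree_diff_le degree_pCons_0 le0)
    next
      fix n show "f n = poly ([:f 0 + poly r 0:] - r) (real n)" using inv[of n] by simp
    qed
  qed
qed

lemma W_pow_bound:
  assumes "\<forall>n. 0 < w n \<and> w n \<le> B" "M \<ge> 0" "\<forall>n. (\<Prod>i<j. (w (n+i))\<^sup>2) \<le> M\<^sup>2" "z \<in> l2"
  shows "l2_norm ((wshift w ^^ j) z) \<le> M * l2_norm z"
proof -
  define f where "f n = (cmod ((wshift w ^^ j) z n))\<^sup>2" for n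
  define Q where "Q n = (\<Prod>i<j. (w (n+i))\<^sup>2)" for n
  have Qb: "\<forall>n. 0 \<le> Q n \<and> Q n \<le> M\<^sup>2" using assms(3) unfolding Q_def by (auto intro: prod_nonneg)
  have gs: "summable (\<lambda>n. Q n * (cmod (z n))\<^sup>2)" by (rule wsum_summable[OF assms(4) Qb])
  have shift: "(\<lambda>i. f (i + j)) = (\<lambda>n. Q n * (cmod (z n))\<^sup>2)"
  proof
    fix n
    have "f (n+j) = (cmod (of_real (\<Prod>i<j. w (n+i)) * z n))\<^sup>2" unfolding f_def W_pow_high ..
    also have "\<dots> = (\<Prod>i<j. w (n+i))\<^sup>2 * (cmod (z n))\<^sup>2"
      by (simp only: norm_mult norm_of_real power_mult_distrib power2_abs)
    also have "\<dots> = Q n * (cmod (z n))\<^sup>2" by (simp add: Q_def prod_power_distrib)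
    finally show "f (n+j) = Q n * (cmod (z n))\<^sup>2" .
  qed
  have "(\<lambda>i. f (i + j)) sums (\<Sum>n. Q n * (cmod (z n))\<^sup>2)" unfolding shift using gs by (rule summable_sums)
  then have "f sums ((\<Sum>n. Q n * (cmod (z n))\<^sup>2) + sum f {..<j})" by (simp add: sums_iff_shift)
  moreover have "sum f {..<j} = 0" by (auto simp: f_def W_pow_low intro: sum.neutral)
  ultimately have fs: "f sums (\<Sum>n. Q n * (cmod (z n))\<^sup>2)" by simp
  have Wz: "(wshift w ^^ j) z \<in> l2" by (rule W_pow_l2[OF assms(1,4)])
  have "(l2_norm ((wshift w ^^ j) z))\<^sup>2 = (\<Sum>n. Q n * (cmod (z n))\<^sup>2)"
    using l2_norm_sq[OF Wz] fs unfolding f_def by (simp add: sums_iff)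
  also have "\<dots> \<le> (\<Sum>n. M\<^sup>2 * (cmod (z n))\<^sup>2)"
    using gs Qb assms(4) by (intro suminf_le) (auto intro: mult_right_mono summable_mult simp: l2_def)
  also have "\<dots> = (M * l2_norm z)\<^sup>2" using assms(4)
    by (simp add: suminf_mult l2_norm_sq power_mult_distrib l2_def)
  finally show ?thesis
    by (rule power2_le_imp_le) (use assms(2) l2_norm_nonneg[OF assms(4)] in auto)
qed

lemma poly_growth:
  fixes p :: "real poly"
  shows "\<exists>A\<ge>0. \<forall>x\<ge>1. \<bar>poly p x\<bar> \<le> A * x ^ degree p"
proof (intro exI[of _ "\<Sum>i\<le>degree p. \<bar>coeff p i\<bar>"] conjI allI impI)
  show "0 \<le> (\<Sum>i\<le>degree p. \<bar>coeff p i\<bar>)" by (simp add: sum_nonneg)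
  fix x :: real assume x: "x \<ge> 1"
  have "\<bar>poly p x\<bar> = \<bar>\<Sum>i\<le>degree p. coeff p i * x ^ i\<bar>" by (simp add: poly_altdef)
  also have "\<dots> \<le> (\<Sum>i\<le>degree p. \<bar>coeff p i * x ^ i\<bar>)" by (rule sum_abs)
  also have "\<dots> \<le> (\<Sum>i\<le>degree p. \<bar>coeff p i\<bar> * x ^ degree p)"
  proof (rule sum_mono)
    fix i assume "i \<in> {..degree p}"
    then have "x ^ i \<le> x ^ degree p" using x by (intro power_increasing) auto
    then show "\<bar>coeff p i * x ^ i\<bar> \<le> \<bar>coeff p i\<bar> * x ^ degree p"
      using x by (simp add: abs_mult mult_left_mono)
  qed
  also have "\<dots> = (\<Sum>i\<le>degree p. \<bar>coeff p i\<bar>) * x ^ degree p" by (simp add: sum_distrib_right)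
  finally show "\<bar>poly p x\<bar> \<le> (\<Sum>i\<le>degree p. \<bar>coeff p i\<bar>) * x ^ degree p" .
qed

lemma exp_beats_poly:
  assumes "q > (1::real)" "A \<ge> 0"
  shows "\<exists>j. A * (real j + 1) ^ d < q ^ j"
proof -
  have "(\<lambda>n. (real n + 1) ^ d / q ^ n) \<longlonglongrightarrow> 0" using assms(1) by real_asymp
  then have "eventually (\<lambda>n. (real n + 1) ^ d / q ^ n < 1 / (A + 1)) sequentially"
    using assms(2) by (intro order_tendstoD(2)) auto
  then obtain n where n: "(real n + 1) ^ d / q ^ n < 1 / (A + 1)"
    by (auto simp: eventually_sequentially)
  have qn: "q ^ n > 0" using assms(1) by simp
  have "(real n + 1) ^ d * (A + 1) < q ^ n" using n qn assms(2)
    by (simp add: field_simps)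
  moreover have "A * (real n + 1) ^ d \<le> (real n + 1) ^ d * (A + 1)" by (simp add: algebra_simps)
  ultimately show ?thesis by (intro exI[of _ n]) linarith
qed

lemma power_hyp:
  fixes p :: "real poly"
  assumes wB: "\<forall>n. 0 < w n \<and> w n \<le> B"
    and ppos: "\<forall>n::nat. poly p (real n) > 0"
    and wp: "\<forall>n::nat. (w n)\<^sup>2 = poly p (real (n + 1)) / poly p (real n)"
    and pmono: "\<forall>n::nat. poly p (real n) \<le> poly p (real (n + 1))"
    and wdec: "\<forall>n\<ge>1. w (Suc n) \<le> w n"
  shows "\<forall>r>1. \<exists>j M. M < r^j \<and> (\<forall>z\<in>l2. l2_norm ((wshift w ^^ j) z) \<le> M * l2_norm z)"
proof (intro allI impI)
  fix r :: real assume r: "r > 1"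
  define P where "P n = poly p (real n)" for n :: nat
  have Ppos: "P n > 0" for n using ppos P_def by auto
  have Pmono: "P a \<le> P b" if "a \<le> b" for a b
    using that
  proof (induction rule: dec_induct)
    case base then show ?case by simp
  next
    case (step k)
    have "P k \<le> P (Suc k)" using pmono unfolding P_def by (metis Suc_eq_plus1)
    then show ?case using step.IH by linarith
  qed
  have tele: "(\<Prod>i<j. (w (n+i))\<^sup>2) = P (n+j) / P n" for n j
  proof (induction j)
    case 0 then show ?case using Ppos[of n] by simp
  next
    case (Suc j)
    have "(\<Prod>i<Suc j. (w (n+i))\<^sup>2) = P (n+j) / P n * (P (n + j + 1) / P (n + j))"
      using Suc wp unfolding P_def by simp
    also have "\<dots> = P (n + Suc j) / P n" using Ppos[of "n+j"] by simp
    finally show ?case .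
  qed
  have wanti: "w b \<le> w a" if "1 \<le> a" "a \<le> b" for a b
  proof -
    have "(\<lambda>k. w (k+1)) (b - 1) \<le> (\<lambda>k. w (k+1)) (a - 1)"
      by (rule lift_Suc_antimono_le[of "\<lambda>k. w (k+1)"]) (use wdec that in auto)
    then show ?thesis using that by simp
  qed
  have Qb: "(\<Prod>i<j. (w (n+i))\<^sup>2) \<le> P (j+1) / P 0" for n j
  proof (cases "n = 0")
    case True
    then have "(\<Prod>i<j. (w (n+i))\<^sup>2) = P j / P 0" using tele[of n j] by simp
    also have "\<dots> \<le> P (j+1) / P 0" using Pmono[of j "j+1"] Ppos[of 0] by (simp add: divide_right_mono)
    finally show ?thesis .
  next
    case False
    have "(\<Prod>i<j. (w (n+i))\<^sup>2) \<le> (\<Prod>i<j. (w (1+i))\<^sup>2)"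
    proof (rule prod_mono)
      fix i assume "i \<in> {..<j}"
      have "w (n+i) \<le> w (1+i)" using wanti[of "1+i" "n+i"] False by simp
      then show "0 \<le> (w (n+i))\<^sup>2 \<and> (w (n+i))\<^sup>2 \<le> (w (1+i))\<^sup>2"
        using wB by (auto intro: power_mono less_imp_le)
    qed
    also have "\<dots> = P (j+1) / P 1" using tele[of 1 j] by (simp add: add.commute)
    also have "\<dots> \<le> P (j+1) / P 0"
      using Pmono[of 0 1] Ppos[of 0] Ppos[of "j+1"] by (intro divide_left_mono) auto
    finally show ?thesis .
  qed
  obtain A where A: "A \<ge> 0" "\<forall>x\<ge>1. \<bar>poly p x\<bar> \<le> A * x ^ degree p" using poly_growth by blast
  obtain j where j: "(A / P 0) * (real j + 1) ^ degree p < (r\<^sup>2) ^ j"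
    using exp_beats_poly[of "r\<^sup>2" "A / P 0" "degree p"] r A(1) Ppos[of 0]
    by (metis divide_nonneg_pos one_less_power zero_less_numeral)
  have "P (j+1) \<le> A * (real j + 1) ^ degree p" using A(2)[rule_format, of "real j + 1"] unfolding P_def
    by (simp add: add.commute)
  then have e1: "P (j+1) / P 0 \<le> A * (real j + 1) ^ degree p / P 0"
    using Ppos[of 0] by (simp add: divide_right_mono)
  have e2: "(r\<^sup>2) ^ j = (r^j)\<^sup>2" by (metis power_mult mult.commute)
  have Pj: "P (j+1) / P 0 < (r^j)\<^sup>2" using e1 e2 j by simp
  define M where "M = sqrt (P (j+1) / P 0)"
  have M0: "M \<ge> 0" unfolding M_def using Ppos[of "j+1"] Ppos[of 0] by simp
  have "M < sqrt ((r^j)\<^sup>2)" unfolding M_def using Pj by (rule real_sqrt_less_mono)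
  moreover have "sqrt ((r^j)\<^sup>2) = r^j" using r by simp
  ultimately have "M < r^j" by simp
  moreover have "\<forall>z\<in>l2. l2_norm ((wshift w ^^ j) z) \<le> M * l2_norm z"
  proof
    fix z assume z: "z \<in> l2"
    have "M\<^sup>2 = P (j+1) / P 0" unfolding M_def using Ppos[of "j+1"] Ppos[of 0] by simp
    then have "\<forall>n. (\<Prod>i<j. (w (n+i))\<^sup>2) \<le> M\<^sup>2" using Qb by simp
    then show "l2_norm ((wshift w ^^ j) z) \<le> M * l2_norm z" by (rule W_pow_bound[OF wB M0 _ z])
  qed
  ultimately show "\<exists>j M. M < r^j \<and> (\<forall>z\<in>l2. l2_norm ((wshift w ^^ j) z) \<le> M * l2_norm z)" by blast
qed

lemma cpoly_good:
  fixes P :: "complex poly"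
  assumes "lead_coeff P \<in> \<real>" "Re (lead_coeff P) > 0"
    and "\<forall>z. poly P z = 0 \<longrightarrow> z \<in> \<real> \<and> Re z < 0"
  shows "\<exists>g. \<forall>x\<ge>0. poly P (of_real x) = of_real (g x) \<and> g x > 0 \<and> g x \<le> g (x+1) \<and>
            g x * g (x+2) \<le> (g (x+1))\<^sup>2"
  using assms
proof (induction "degree P" arbitrary: P)
  case 0
  then obtain c where P: "P = [:c:]" by (metis degree_eq_zeroE)
  then have "c \<in> \<real>" "Re c > 0" using 0 by auto
  then have "c = of_real (Re c)" by (simp add: complex_is_Real_iff complex_eq_iff)
  show ?case
    by (rule exI[of _ "\<lambda>_. Re c"]) (use \<open>Re c > 0\<close> \<open>c = of_real (Re c)\<close> P in \<open>auto simp: power2_eq_square\<close>)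
next
  case (Suc d)
  then have "\<not> constant (poly P)" by (simp add: constant_degree)
  then obtain z where z: "poly P z = 0" using fundamental_theorem_of_algebra by blast
  then have "z \<in> \<real>" "Re z < 0" using Suc.prems by auto
  define a where "a = Re z"
  have za: "z = of_real a" using \<open>z \<in> \<real>\<close> a_def by (simp add: complex_is_Real_iff complex_eq_iff)
  obtain Q where PQ: "P = [:-z,1:] * Q" using z poly_eq_0_iff_dvd by (metis dvdE)
  have Q0: "Q \<noteq> 0" using PQ Suc.hyps(2) by auto
  have "degree P = degree [:-z,1:] + degree Q" unfolding PQ by (rule degree_mult_eq) (use Q0 in auto)
  then have dQ: "degree Q = d" using Suc.hyps(2) by simp
  have lQ: "lead_coeff Q = lead_coeff P" unfolding PQ lead_coeff_mult by simp
  have rQ: "\<forall>w. poly Q w = 0 \<longrightarrow> w \<in> \<real> \<and> Re w < 0"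
    using Suc.prems(3) PQ by auto
  obtain g where g: "\<forall>x\<ge>0. poly Q (of_real x) = of_real (g x) \<and> g x > 0 \<and> g x \<le> g (x+1) \<and>
            g x * g (x+2) \<le> (g (x+1))\<^sup>2"
    using Suc.hyps(1)[OF dQ[symmetric]] lQ Suc.prems rQ by auto
  show ?case
  proof (rule exI[of _ "\<lambda>x. (x - a) * g x"], intro allI impI conjI)
    fix x :: real assume x: "x \<ge> 0"
    have a0: "a < 0" using \<open>Re z < 0\<close> a_def by simp
    have g0: "g x > 0" "g x \<le> g (x+1)" "g x * g (x+2) \<le> (g (x+1))\<^sup>2" using g x by auto
    have g1: "g (x+1) > 0" using g x by auto
    have g2: "g (x+2) > 0" using g x by auto
    have "poly P (of_real x) = (of_real x - z) * poly Q (of_real x)" unfolding PQ by (simp add: algebra_simps)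
    then show "poly P (of_real x) = of_real ((x - a) * g x)" using g x za by simp
    show "(x - a) * g x > 0" using a0 x g0 by simp
    show "(x - a) * g x \<le> (x + 1 - a) * g (x + 1)"
      by (rule mult_mono) (use a0 x g0 in auto)
    have e: "(x - a) * (x + 2 - a) \<le> (x + 1 - a)\<^sup>2" by (simp add: power2_eq_square algebra_simps)
    have "(x - a) * g x * ((x + 2 - a) * g (x + 2)) = ((x - a) * (x + 2 - a)) * (g x * g (x+2))"
      by (simp add: algebra_simps)
    also have "\<dots> \<le> (x + 1 - a)\<^sup>2 * (g (x+1))\<^sup>2"
      by (rule mult_mono[OF e g0(3)]) (use a0 x g0 g2 in auto)
    also have "\<dots> = ((x + 1 - a) * g (x + 1))\<^sup>2" by (simp add: power_mult_distrib)
    finally show "(x - a) * g x * ((x + 2 - a) * g (x + 2)) \<le> ((x + 1 - a) * g (x + 1))\<^sup>2"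
      by (simp add: add.assoc)
  qed
qed

lemma poly_map_of_real: "poly (map_poly complex_of_real p) (of_real x) = of_real (poly p x)"
  by (induction p) (auto simp: map_poly_pCons)

lemma moreover_part:
  fixes p :: "real poly"
  assumes "lead_coeff p > 0"
    and "\<forall>z::complex. poly (map_poly complex_of_real p) z = 0 \<longrightarrow> z \<in> \<real> \<and> Re z < 0"
  shows "(\<forall>n::nat. poly p (real n) \<le> poly p (real (n + 1))) \<and>
         (\<forall>n::nat. n \<ge> 1 \<longrightarrow> poly p (real n) * poly p (real (n + 2)) \<le> (poly p (real (n + 1)))\<^sup>2)"
proof -
  let ?P = "map_poly complex_of_real p"
  have lc: "lead_coeff ?P = of_real (lead_coeff p)"
    by (simp add: degree_map_poly coeff_map_poly)
  obtain g where g: "\<forall>x\<ge>0. poly ?P (of_real x) = of_real (g x) \<and> g x > 0 \<and> g x \<le> g (x+1) \<and>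
            g x * g (x+2) \<le> (g (x+1))\<^sup>2"
    using cpoly_good[of ?P] lc assms by auto
  have pg: "poly p x = g x" if "x \<ge> 0" for x
    using g that poly_map_of_real[of p x] by auto
  show ?thesis
  proof (intro conjI allI impI)
    fix n :: nat
    show "poly p (real n) \<le> poly p (real (n + 1))"
    proof -
      have "g (real n) \<le> g (real n + 1)" using g by auto
      moreover have "real (n+1) = real n + 1" by auto
      ultimately show ?thesis using pg[of "real n"] pg[of "real n + 1"] by (simp only:)
    qed
    show "poly p (real n) * poly p (real (n + 2)) \<le> (poly p (real (n + 1)))\<^sup>2"
    proof -
      have "g (real n) * g (real n + 2) \<le> (g (real n + 1))\<^sup>2" using g by auto
      moreover have "real (n+1) = real n + 1" "real (n+2) = real n + 2" by auto
      ultimately show ?thesis using pg[of "real n"] pg[of "real n + 1"] pg[of "real n + 2"] by (simp only:)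
    qed
  qed
qed

lemma tele_p:
  fixes p :: "real poly"
  assumes ppos: "\<forall>n::nat. poly p (real n) > 0"
    and wp: "\<forall>n::nat. (w n)\<^sup>2 = poly p (real (n + 1)) / poly p (real n)"
  shows "(\<Prod>i<j. (w (n+i))\<^sup>2) = poly p (real (n+j)) / poly p (real n)"
proof (induction j)
  case 0 then show ?case using ppos[rule_format, of n] by simp
next
  case (Suc j)
  have "(\<Prod>i<Suc j. (w (n+i))\<^sup>2) = poly p (real (n+j)) / poly p (real n) * (poly p (real (n + j + 1)) / poly p (real (n + j)))"
    using Suc wp by simp
  also have "\<dots> = poly p (real (n + Suc j)) / poly p (real n)" using ppos[rule_format, of "n+j"] by simp
  finally show ?case .
qed

lemma prod_split_nat: "(\<Prod>i<n+k. f i) = (\<Prod>i<n. f i) * (\<Prod>i<k. f (n+i :: nat)) "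
  by (induction k) (simp_all add: mult.assoc)

theorem proposition3p3:
  fixes w :: "nat \<Rightarrow> real" and m :: nat
  assumes "\<forall>n. w n > 0" and "bdd_above (range w)" and "m \<ge> 2"
  shows "((weakly_concave (wshift w) \<and> m_isometry m (wshift w)) \<longleftrightarrow>
           (\<exists>p :: real poly. degree p \<le> m - 1 \<and>
              (\<forall>n::nat. poly p (real n) > 0) \<and>
              (\<forall>n::nat. (w n)\<^sup>2 = poly p (real (n + 1)) / poly p (real n)) \<and>
              (\<forall>n::nat. poly p (real n) \<le> poly p (real (n + 1))) \<and>
              (\<forall>n::nat. n \<ge> 1 \<longrightarrow> poly p (real n) * poly p (real (n + 2)) \<le> (poly p (real (n + 1)))\<^sup>2)))
         \<and> (\<forall>p :: real poly. lead_coeff p > 0 \<and>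
              (\<forall>z::complex. poly (map_poly complex_of_real p) z = 0 \<longrightarrow> z \<in> \<real> \<and> Re z < 0) \<longrightarrow>
              (\<forall>n::nat. poly p (real n) \<le> poly p (real (n + 1))) \<and>
              (\<forall>n::nat. n \<ge> 1 \<longrightarrow> poly p (real n) * poly p (real (n + 2)) \<le> (poly p (real (n + 1)))\<^sup>2))"
proof (intro conjI)
  obtain B where B: "\<forall>n. w n \<le> B" using assms(2) by (auto simp: bdd_above_def)
  have wB: "\<forall>n. 0 < w n \<and> w n \<le> B" using B assms(1) by blast
  show "(weakly_concave (wshift w) \<and> m_isometry m (wshift w)) \<longleftrightarrow>
           (\<exists>p :: real poly. degree p \<le> m - 1 \<and>
              (\<forall>n::nat. poly p (real n) > 0) \<and>
              (\<forall>n::nat. (w n)\<^sup>2 = poly p (real (n + 1)) / poly p (real n)) \<and>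
              (\<forall>n::nat. poly p (real n) \<le> poly p (real (n + 1))) \<and>
              (\<forall>n::nat. n \<ge> 1 \<longrightarrow> poly p (real n) * poly p (real (n + 2)) \<le> (poly p (real (n + 1)))\<^sup>2))"
  proof
    assume h: "weakly_concave (wshift w) \<and> m_isometry m (wshift w)"
    have w1: "\<forall>n. 1 \<le> w n"
      using h norm_cond_iff[OF wB] unfolding weakly_concave_def by blast
    have wdec: "\<forall>n\<ge>1. w (Suc n) \<le> w n"
      using h dual_cond_iff[OF wB w1] unfolding weakly_concave_def by blast
    have mi: "\<forall>n. (\<Sum>k\<le>m. (-1)^k * real (m choose k) * (\<Prod>i<k. (w (n+i))\<^sup>2)) = 0"
      using h miso_iff[OF wB] by blast
    define P where "P n = (\<Prod>i<n. (w i)\<^sup>2)" for n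
    have Ppos: "P n > 0" for n unfolding P_def
    proof (rule prod_pos)
      fix i show "0 < (w i)\<^sup>2" using assms(1)[rule_format, of i] by simp
    qed
    have PSuc: "P (Suc n) = P n * (w n)\<^sup>2" for n unfolding P_def by simp
    have "fd m P n = 0" for n
    proof -
      have "fd m P n = (\<Sum>k\<le>m. (-1)^k * real (m choose k) * (P n * (\<Prod>i<k. (w (n+i))\<^sup>2)))"
        unfolding fd_def P_def prod_split_nat ..
      also have "\<dots> = P n * (\<Sum>k\<le>m. (-1)^k * real (m choose k) * (\<Prod>i<k. (w (n+i))\<^sup>2))"
        by (simp add: sum_distrib_left algebra_simps)
      also have "\<dots> = 0" using mi by simp
      finally show ?thesis .
    qed
    then obtain p where p: "degree p \<le> m - 1" "\<forall>n. P n = poly p (real n)"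
      using fd_zero_poly[of m P] by blast
    show "\<exists>p :: real poly. degree p \<le> m - 1 \<and>
              (\<forall>n::nat. poly p (real n) > 0) \<and>
              (\<forall>n::nat. (w n)\<^sup>2 = poly p (real (n + 1)) / poly p (real n)) \<and>
              (\<forall>n::nat. poly p (real n) \<le> poly p (real (n + 1))) \<and>
              (\<forall>n::nat. n \<ge> 1 \<longrightarrow> poly p (real n) * poly p (real (n + 2)) \<le> (poly p (real (n + 1)))\<^sup>2)"
    proof (intro exI[of _ p] conjI allI impI)
      show "degree p \<le> m - 1" by (rule p(1))
    next
      fix n :: nat
      have pn: "poly p (real k) = P k" for k using p(2) by simp
      have e0: "poly p (real n) = P n" by (rule pn)
      have e1: "poly p (real (n + 1)) = P (Suc n)" using pn[of "n+1"] by simp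
      have e2: "poly p (real (n + 2)) = P (Suc (Suc n))" using pn[of "n+2"] by simp
      show "poly p (real n) > 0" using pn Ppos by simp
      show "(w n)\<^sup>2 = poly p (real (n + 1)) / poly p (real n)"
        unfolding e0 e1 using PSuc Ppos[of n] by simp
      have "1 \<le> (w n)\<^sup>2" using w1 by (metis one_le_power)
      then show "poly p (real n) \<le> poly p (real (n + 1))"
        unfolding e0 e1 using PSuc Ppos[of n] by (simp add: mult_le_cancel_left1)
      assume n1: "n \<ge> 1"
      have "w (Suc n) \<le> w n" using wdec n1 by blast
      then have ww: "(w (Suc n))\<^sup>2 \<le> (w n)\<^sup>2" using assms(1) by (simp add: power_mono less_imp_le)
      have "P n * P (n+2) = P n * P (Suc n) * (w (Suc n))\<^sup>2" by (simp add: PSuc)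
      also have "\<dots> \<le> P n * P (Suc n) * (w n)\<^sup>2"
        using ww Ppos[of n] Ppos[of "Suc n"] by (simp add: mult_left_mono)
      also have "\<dots> = (P (Suc n))\<^sup>2" by (simp add: PSuc power2_eq_square)
      finally show "poly p (real n) * poly p (real (n + 2)) \<le> (poly p (real (n + 1)))\<^sup>2"
        unfolding e0 e1 e2 by (simp add: numeral_2_eq_2)
    qed
  next
    assume "\<exists>p :: real poly. degree p \<le> m - 1 \<and>
              (\<forall>n::nat. poly p (real n) > 0) \<and>
              (\<forall>n::nat. (w n)\<^sup>2 = poly p (real (n + 1)) / poly p (real n)) \<and>
              (\<forall>n::nat. poly p (real n) \<le> poly p (real (n + 1))) \<and>
              (\<forall>n::nat. n \<ge> 1 \<longrightarrow> poly p (real n) * poly p (real (n + 2)) \<le> (poly p (real (n + 1)))\<^sup>2)"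
    then obtain p :: "real poly" where pdeg: "degree p \<le> m - 1"
      and ppos: "\<forall>n::nat. poly p (real n) > 0"
      and wp: "\<forall>n::nat. (w n)\<^sup>2 = poly p (real (n + 1)) / poly p (real n)"
      and pmono: "\<forall>n::nat. poly p (real n) \<le> poly p (real (n + 1))"
      and plc: "\<forall>n::nat. n \<ge> 1 \<longrightarrow> poly p (real n) * poly p (real (n + 2)) \<le> (poly p (real (n + 1)))\<^sup>2"
      by blast
    have w1: "\<forall>n. 1 \<le> w n"
    proof
      fix n
      have "poly p (real n) \<le> poly p (real (n + 1))" using pmono by blast
      then have "1 \<le> (w n)\<^sup>2" using wp ppos[rule_format, of n] by (simp add: le_divide_eq_1)
      then show "1 \<le> w n" using assms(1)[rule_format, of n]
        by (metis abs_of_pos abs_le_square_iff abs_one power_one)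
    qed
    have wdec: "\<forall>n\<ge>1. w (Suc n) \<le> w n"
    proof (intro allI impI)
      fix n :: nat assume n1: "n \<ge> 1"
      define a where "a = poly p (real n)"
      define b where "b = poly p (real (n+1))"
      define c where "c = poly p (real (n+2))"
      have abc: "a > 0" "b > 0" "c > 0" unfolding a_def b_def c_def
        using ppos[rule_format, of n] ppos[rule_format, of "n+1"] ppos[rule_format, of "n+2"] by blast+
      have "a * c \<le> b\<^sup>2" using plc n1 unfolding a_def b_def c_def by blast
      then have "c / b \<le> b / a" using abc by (simp add: field_simps power2_eq_square)
      moreover have "(w (Suc n))\<^sup>2 = c / b" using wp unfolding b_def c_def
        by (metis Suc_eq_plus1 add_Suc_right one_add_one)
      moreover have "(w n)\<^sup>2 = b / a" using wp unfolding a_def b_def by blast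
      ultimately have "(w (Suc n))\<^sup>2 \<le> (w n)\<^sup>2" by simp
      then show "w (Suc n) \<le> w n" using assms(1)
        by (meson less_imp_le power2_le_imp_le)
    qed
    have mi: "m_isometry m (wshift w)"
      unfolding miso_iff[OF wB]
    proof
      fix n
      have dp: "degree p < m" using pdeg assms(3) by simp
      have "(\<Sum>k\<le>m. (-1)^k * real (m choose k) * (\<Prod>i<k. (w (n+i))\<^sup>2))
          = (\<Sum>k\<le>m. (-1)^k * real (m choose k) * (poly p (real (n+k)) / poly p (real n)))"
        using tele_p[OF ppos wp] by simp
      also have "\<dots> = fd m (\<lambda>n. poly p (real n)) n / poly p (real n)"
        unfolding fd_def by (simp add: sum_divide_distrib)
      also have "\<dots> = 0" using fd_poly[of p m n] dp by simp
      finally show "(\<Sum>k\<le>m. (-1)^k * real (m choose k) * (\<Prod>i<k. (w (n+i))\<^sup>2)) = 0" .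
    qed
    have H: "\<forall>r>1. \<exists>j M. M < r^j \<and> (\<forall>z\<in>l2. l2_norm ((wshift w ^^ j) z) \<le> M * l2_norm z)"
      by (rule power_hyp[OF wB ppos wp pmono wdec])
    have "weakly_concave (wshift w)"
      unfolding weakly_concave_def
      using left_inv[OF wB w1] ap_spec_sub[OF wB w1 H] norm_cond_iff[OF wB] w1 dual_cond_iff[OF wB w1] wdec
      by blast
    then show "weakly_concave (wshift w) \<and> m_isometry m (wshift w)" using mi by blast
  qed
next
  show "\<forall>p :: real poly. lead_coeff p > 0 \<and>
              (\<forall>z::complex. poly (map_poly complex_of_real p) z = 0 \<longrightarrow> z \<in> \<real> \<and> Re z < 0) \<longrightarrow>
              (\<forall>n::nat. poly p (real n) \<le> poly p (real (n + 1))) \<and>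
              (\<forall>n::nat. n \<ge> 1 \<longrightarrow> poly p (real n) * poly p (real (n + 2)) \<le> (poly p (real (n + 1)))\<^sup>2)"
    using moreover_part by blast
qed

end
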